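(* Suppose $\mathcal M$ is unichain. For every state $s\in\mathcal S$, the optimal activation advantage $\lambda\mapsto\alpha^*_s(\lambda)$ is $(2D_{\max}+1)$-Lipschitz continuous on $\mathbb R$, where $D_{\max}:=\max_{\pi\subseteq\mathcal S}D(P^\pi)$.
   Context: Setting. An MDP is $\mathcal M=(\mathcal S,\{0,1\},(P^a)_a,(r^a)_a)$, finite $\mathcal S$, row-stochastic $P^0,P^1$, rewards $r^0,r^1\in\mathbb R^{\mathcal S}$. A policy is a subset $\pi\subseteq\mathcal S$ of states where action 1 is played, inducing $P^\pi$, $r^\pi$; $\mathcal M$ is unichain if every $P^\pi$ has a single recurrent class. For $\lambda\in\mathbb R$, $\mathcal M(\lambda)$ has the same transitions and rewards $r^1-\lambda\mathbf 1$ (action 1), $r^0$ (action 0). For a unichain policy, bias $b^\pi(\lambda)$ solves $g^\pi\mathbf 1+b^\pi=r^\pi+P^\pi b^\pi$; activation advantage $\alpha^\pi_s(\lambda)=r^1_s-\lambda-r^0_s+(P^1_{s,\cdot}-P^0_{s,\cdot})\cdot b^\pi(\lambda)$. A policy is BO (bias optimal) in $\mathcal M(\lambda)$ if gain optimal and bias-maximal among gain-optimal policies; for unichain MDPs $\pi$ is BO iff $\alpha^\pi_s(\lambda)\ge0$ for $s\in\pi$, $\le0$ for $s\notin\pi$. The optimal activation advantage $\alpha^*_s(\lambda):=\alpha^\pi_s(\lambda)$ for any BO policy $\pi$ of $\mathcal M(\lambda)$ (independent of the choice); it is continuous and piecewise affine in $\lambda$. Diameter of unichain $P$ with recurrent class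 $\mathcal S_r$: $D(P)=\max_{s\in\mathcal S,s'\in\mathcal S_r}\mathbb E^P[\tau_{s,s'}]$. *)

theory Defs
  imports "HOL-Analysis.Analysis"
begin

text \<open>An MDP with finite state type 's, two actions 0 and 1, transition matrices P0 P1
 (functions 's \<Rightarrow> 's \<Rightarrow> real) and rewards r0 r1.\<close>

definition stochastic :: "('s::finite \<Rightarrow> 's \<Rightarrow> real) \<Rightarrow> bool" where
  "stochastic P \<longleftrightarrow> (\<forall>s t. 0 \<le> P s t) \<and> (\<forall>s. (\<Sum>t\<in>UNIV. P s t) = 1)"

text \<open>Policy \<pi> (set of states where action 1 is played): induced transitions and rewards
 in the MDP M(l) (action 1 reward r1 - l).\<close>

definition pol_P :: "('s \<Rightarrow> 's \<Rightarrow> real) \<Rightarrow> ('s \<Rightarrow> 's \<Rightarrow> real) \<Rightarrow> 's set \<Rightarrow> 's \<Rightarrow> 's \<Rightarrow> real" where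
  "pol_P P0 P1 \<pi> s t = (if s \<in> \<pi> then P1 s t else P0 s t)"

definition pol_r :: "('s \<Rightarrow> real) \<Rightarrow> ('s \<Rightarrow> real) \<Rightarrow> real \<Rightarrow> 's set \<Rightarrow> 's \<Rightarrow> real" where
  "pol_r r0 r1 l \<pi> s = (if s \<in> \<pi> then r1 s - l else r0 s)"

definition reach :: "('s \<Rightarrow> 's \<Rightarrow> real) \<Rightarrow> ('s \<times> 's) set" where
  "reach P = {(s, t). 0 < P s t}\<^sup>*"

definition recurrent :: "('s \<Rightarrow> 's \<Rightarrow> real) \<Rightarrow> 's \<Rightarrow> bool" where
  "recurrent P s \<longleftrightarrow> (\<forall>t. (s, t) \<in> reach P \<longrightarrow> (t, s) \<in> reach P)"

definition rec_classes :: "('s \<Rightarrow> 's \<Rightarrow> real) \<Rightarrow> 's set set" where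
  "rec_classes P = {C. \<exists>s. recurrent P s \<and> C = {t. (s, t) \<in> reach P}}"

definition unichain_chain :: "('s \<Rightarrow> 's \<Rightarrow> real) \<Rightarrow> bool" where
  "unichain_chain P \<longleftrightarrow> card (rec_classes P) = 1"

definition unichain :: "('s::finite \<Rightarrow> 's \<Rightarrow> real) \<Rightarrow> ('s \<Rightarrow> 's \<Rightarrow> real) \<Rightarrow> bool" where
  "unichain P0 P1 \<longleftrightarrow> (\<forall>\<pi>. unichain_chain (pol_P P0 P1 \<pi>))"

fun mat_pow :: "('s::finite \<Rightarrow> 's \<Rightarrow> real) \<Rightarrow> nat \<Rightarrow> 's \<Rightarrow> 's \<Rightarrow> real" where
  "mat_pow P 0 = (\<lambda>s t. if s = t then 1 else 0)"
| "mat_pow P (Suc n) = (\<lambda>s t. \<Sum>u\<in>UNIV. P s u * mat_pow P n u t)"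

definition mv :: "('s::finite \<Rightarrow> 's \<Rightarrow> real) \<Rightarrow> ('s \<Rightarrow> real) \<Rightarrow> 's \<Rightarrow> real" where
  "mv P v s = (\<Sum>t\<in>UNIV. P s t * v t)"

definition gain :: "('s::finite \<Rightarrow> 's \<Rightarrow> real) \<Rightarrow> ('s \<Rightarrow> real) \<Rightarrow> 's \<Rightarrow> real" where
  "gain P r s = lim (\<lambda>n. (\<Sum>k<n. mv (mat_pow P k) r s) / real n)"

definition bias :: "('s::finite \<Rightarrow> 's \<Rightarrow> real) \<Rightarrow> ('s \<Rightarrow> real) \<Rightarrow> 's \<Rightarrow> real" where
  "bias P r s = lim (\<lambda>N. (\<Sum>n<N. \<Sum>k<n. mv (mat_pow P k) (\<lambda>u. r u - gain P r u) s) / real N)"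

definition pgain where
  "pgain P0 P1 r0 r1 l \<pi> = gain (pol_P P0 P1 \<pi>) (pol_r r0 r1 l \<pi>)"

definition pbias where
  "pbias P0 P1 r0 r1 l \<pi> = bias (pol_P P0 P1 \<pi>) (pol_r r0 r1 l \<pi>)"

definition adv :: "('s::finite \<Rightarrow> 's \<Rightarrow> real) \<Rightarrow> ('s \<Rightarrow> 's \<Rightarrow> real) \<Rightarrow> ('s \<Rightarrow> real) \<Rightarrow> ('s \<Rightarrow> real)
    \<Rightarrow> real \<Rightarrow> 's set \<Rightarrow> 's \<Rightarrow> real" where
  "adv P0 P1 r0 r1 l \<pi> s = r1 s - l - r0 s
     + (\<Sum>t\<in>UNIV. (P1 s t - P0 s t) * pbias P0 P1 r0 r1 l \<pi> t)"

definition gain_opt where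
  "gain_opt P0 P1 r0 r1 l \<pi> \<longleftrightarrow>
     (\<forall>\<pi>' s. pgain P0 P1 r0 r1 l \<pi>' s \<le> pgain P0 P1 r0 r1 l \<pi> s)"

definition bias_opt where
  "bias_opt P0 P1 r0 r1 l \<pi> \<longleftrightarrow> gain_opt P0 P1 r0 r1 l \<pi> \<and>
     (\<forall>\<pi>'. gain_opt P0 P1 r0 r1 l \<pi>' \<longrightarrow>
        (\<forall>s. pbias P0 P1 r0 r1 l \<pi>' s \<le> pbias P0 P1 r0 r1 l \<pi> s))"

text \<open>Optimal activation advantage: the advantage of (any, here: a chosen) BO policy.\<close>

definition opt_adv where
  "opt_adv P0 P1 r0 r1 l s = adv P0 P1 r0 r1 l (SOME \<pi>. bias_opt P0 P1 r0 r1 l \<pi>) s"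

text \<open>Expected hitting time E[tau_{s,s'}], tau_{s,s'} = min{t \<ge> 0. X_t = s'} with X_0 = s,
 written as \<Sum>_{n\<ge>0} P(tau > n); P(tau > n) = P_s(X_0,...,X_n \<noteq> s') computed with the
 taboo matrix (column s' set to 0).\<close>

definition taboo :: "('s \<Rightarrow> 's \<Rightarrow> real) \<Rightarrow> 's \<Rightarrow> 's \<Rightarrow> 's \<Rightarrow> real" where
  "taboo P s' u t = (if t = s' then 0 else P u t)"

definition exp_hit :: "('s::finite \<Rightarrow> 's \<Rightarrow> real) \<Rightarrow> 's \<Rightarrow> 's \<Rightarrow> real" where
  "exp_hit P s s' = (\<Sum>n. if s = s' then 0 else (\<Sum>t\<in>UNIV. mat_pow (taboo P s') n s t))"

definition diameter :: "('s::finite \<Rightarrow> 's \<Rightarrow> real) \<Rightarrow> real" where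
  "diameter P = Max {exp_hit P s s' | s s'. recurrent P s'}"

definition D_max :: "('s::finite \<Rightarrow> 's \<Rightarrow> real) \<Rightarrow> ('s \<Rightarrow> 's \<Rightarrow> real) \<Rightarrow> real" where
  "D_max P0 P1 = Max ((\<lambda>\<pi>. diameter (pol_P P0 P1 \<pi>)) ` UNIV)"

end

theory Submission
  imports Defs
begin

lemma mv_Suc: "mv (mat_pow M (Suc k)) v s = mv M (mv (mat_pow M k) v) s"
proof -
  have "mv (mat_pow M (Suc k)) v s = (\<Sum>t\<in>UNIV. (\<Sum>u\<in>UNIV. M s u * mat_pow M k u t) * v t)"
    unfolding mv_def by simp
  also have "\<dots> = (\<Sum>t\<in>UNIV. \<Sum>u\<in>UNIV. M s u * (mat_pow M k u t * v t))"
    by (simp add: sum_distrib_right mult.assoc)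
  also have "\<dots> = (\<Sum>u\<in>UNIV. \<Sum>t\<in>UNIV. M s u * (mat_pow M k u t * v t))"
    by (rule sum.swap)
  also have "\<dots> = mv M (mv (mat_pow M k) v) s"
    unfolding mv_def by (simp add: sum_distrib_left)
  finally show ?thesis .
qed

lemma mv_0[simp]: "mv (mat_pow M 0) v = v"
proof
  fix s
  have "(\<Sum>t\<in>UNIV. (if s = t then 1 else 0) * v t) = (\<Sum>t\<in>UNIV. (if s = t then v t else 0))"
    by (rule sum.cong) auto
  then show "mv (mat_pow M 0) v s = v s" unfolding mv_def by simp
qed

lemma mv_add: "mv M (\<lambda>t. v t + w t) s = mv M v s + mv M w s"
  unfolding mv_def by (simp add: distrib_left sum.distrib)

lemma mv_diff: "mv M (\<lambda>t. v t - w t) s = mv M v s - mv M w s"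
  unfolding mv_def by (simp add: right_diff_distrib sum_subtractf)

lemma mv_scale: "mv M (\<lambda>t. c * v t) s = c * mv M v s"
  unfolding mv_def by (simp add: sum_distrib_left ac_simps)

lemma mv_uminus: "mv M (\<lambda>t. - v t) s = - mv M v s"
  unfolding mv_def by (simp add: sum_negf)

lemma mv_sum: "mv M (\<lambda>t. \<Sum>i\<in>I. v i t) s = (\<Sum>i\<in>I. mv M (v i) s)"
  unfolding mv_def by (simp add: sum_distrib_left) (rule sum.swap)

lemma stoch_mv_const: "stochastic P \<Longrightarrow> mv P (\<lambda>_. c) s = c"
  unfolding mv_def stochastic_def by (simp add: sum_distrib_right[symmetric])

lemma mv_mono: "(\<And>s t. 0 \<le> M s t) \<Longrightarrow> (\<And>t. v t \<le> w t) \<Longrightarrow> mv M v s \<le> mv M w s"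
  unfolding mv_def by (intro sum_mono mult_left_mono) auto

lemma mat_pow_nonneg: "(\<And>s t. 0 \<le> M s t) \<Longrightarrow> 0 \<le> mat_pow M k s t"
  by (induction k arbitrary: s t) (auto intro!: sum_nonneg)

lemma stoch_nonneg: "stochastic P \<Longrightarrow> 0 \<le> P s t"
  unfolding stochastic_def by auto

lemma stoch_pow: "stochastic P \<Longrightarrow> stochastic (mat_pow P k)"
proof (induction k)
  case 0
  then show ?case unfolding stochastic_def by auto
next
  case (Suc k)
  have nn: "\<And>s t. 0 \<le> mat_pow P (Suc k) s t"
    using mat_pow_nonneg[of P] Suc.prems stoch_nonneg by blast
  have "(\<Sum>t\<in>UNIV. mat_pow P (Suc k) s t) = 1" for s
  proof -
    have "(\<Sum>t\<in>UNIV. mat_pow P (Suc k) s t) = (\<Sum>u\<in>UNIV. P s u * (\<Sum>t\<in>UNIV. mat_pow P k u t))"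
      by (simp add: sum_distrib_left) (rule sum.swap)
    also have "\<dots> = (\<Sum>u\<in>UNIV. P s u)"
      using Suc unfolding stochastic_def by simp
    also have "\<dots> = 1" using Suc.prems unfolding stochastic_def by simp
    finally show ?thesis .
  qed
  then show ?case using nn unfolding stochastic_def by blast
qed

lemma mv_pow_const: "stochastic P \<Longrightarrow> mv (mat_pow P k) (\<lambda>_. c) s = c"
  using stoch_mv_const stoch_pow by blast

lemma mv_bound_le: "stochastic P \<Longrightarrow> (\<And>t. v t \<le> B) \<Longrightarrow> mv P v s \<le> B"
  using mv_mono[of P v "\<lambda>_. B"] stoch_mv_const stoch_nonneg by metis

lemma mv_bound_ge: "stochastic P \<Longrightarrow> (\<And>t. B \<le> v t) \<Longrightarrow> B \<le> mv P v s"
  using mv_mono[of P "\<lambda>_. B" v] stoch_mv_const stoch_nonneg by metis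

lemma mv_bound_abs: "stochastic P \<Longrightarrow> (\<And>t. \<bar>v t\<bar> \<le> B) \<Longrightarrow> \<bar>mv P v s\<bar> \<le> B"
proof -
  assume a: "stochastic P" "\<And>t. \<bar>v t\<bar> \<le> B"
  have "mv P v s \<le> B" by (rule mv_bound_le[OF a(1)]) (use a(2) abs_le_D1 in blast)
  moreover have "-B \<le> mv P v s" by (rule mv_bound_ge[OF a(1)]) (metis a(2) abs_le_D2 minus_le_iff)
  ultimately show ?thesis by linarith
qed

definition closed_set :: "('s \<Rightarrow> 's \<Rightarrow> real) \<Rightarrow> 's set \<Rightarrow> bool" where
  "closed_set P M \<longleftrightarrow> (\<forall>s t. s \<in> M \<longrightarrow> 0 < P s t \<longrightarrow> t \<in> M)"

lemma closed_reach:
  assumes "closed_set P M" "s \<in> M" "(s, t) \<in> reach P" shows "t \<in> M"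
  using assms(3) unfolding reach_def
proof (induction rule: rtrancl_induct)
  case base then show ?case using assms(2) by simp
next
  case (step y z) then show ?case using assms(1) unfolding closed_set_def by auto
qed

lemma reach_trans: "(a, b) \<in> reach P \<Longrightarrow> (b, c) \<in> reach P \<Longrightarrow> (a, c) \<in> reach P"
  unfolding reach_def by (rule rtrancl_trans)

lemma reach_refl[simp]: "(a, a) \<in> reach P"
  unfolding reach_def by simp

lemma closed_has_recurrent:
  fixes P :: "'s::finite \<Rightarrow> 's \<Rightarrow> real"
  assumes "closed_set P M" "s0 \<in> M"
  shows "\<exists>s\<in>M. recurrent P s"
proof -
  define R where "R s = {t. (s, t) \<in> reach P}" for s
  obtain s where s: "s \<in> M" "\<forall>s'. s' \<in> M \<longrightarrow> card (R s) \<le> card (R s')"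
    using ex_has_least_nat[of "\<lambda>s. s \<in> M" s0 "\<lambda>s. card (R s)"] assms(2) by (auto simp only:)
  have "(t, s) \<in> reach P" if "(s, t) \<in> reach P" for t
  proof -
    have tM: "t \<in> M" using closed_reach[OF assms(1) s(1) that] .
    have sub: "R t \<subseteq> R s" unfolding R_def using reach_trans[OF that] by blast
    have "card (R s) \<le> card (R t)" using s(2) tM by simp
    then have "R t = R s" using card_seteq[OF finite sub] by simp
    moreover have "s \<in> R s" unfolding R_def by simp
    ultimately have "s \<in> R t" by simp
    then show ?thesis unfolding R_def by simp
  qed
  then show ?thesis using s(1) unfolding recurrent_def by blast
qed

lemma rec_class_mem: "recurrent P s \<Longrightarrow> {t. (s, t) \<in> reach P} \<in> rec_classes P"
  unfolding rec_classes_def by auto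

lemma unichain_classes_eq:
  assumes "unichain_chain P" "recurrent P s1" "recurrent P s2"
  shows "{t. (s1, t) \<in> reach P} = {t. (s2, t) \<in> reach P}"
proof -
  from assms(1) obtain C where "rec_classes P = {C}"
    unfolding unichain_chain_def by (meson card_1_singletonE)
  then show ?thesis using rec_class_mem[OF assms(2)] rec_class_mem[OF assms(3)] by simp
qed

lemma unichain_closed_inter:
  fixes P :: "'s::finite \<Rightarrow> 's \<Rightarrow> real"
  assumes "unichain_chain P" "closed_set P M1" "closed_set P M2" "a \<in> M1" "b \<in> M2"
  shows "M1 \<inter> M2 \<noteq> {}"
proof -
  obtain s1 where s1: "s1 \<in> M1" "recurrent P s1" using closed_has_recurrent[OF assms(2,4)] by auto
  obtain s2 where s2: "s2 \<in> M2" "recurrent P s2" using closed_has_recurrent[OF assms(3,5)] by auto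
  have "s1 \<in> {t. (s2, t) \<in> reach P}"
    using unichain_classes_eq[OF assms(1) s1(2) s2(2)] by auto
  then have "s1 \<in> M2" using closed_reach[OF assms(3) s2(1)] by simp
  then show ?thesis using s1 by auto
qed

lemma unichain_reach_rec:
  fixes P :: "'s::finite \<Rightarrow> 's \<Rightarrow> real"
  assumes "unichain_chain P" "recurrent P s'"
  shows "(x, s') \<in> reach P"
proof -
  have cl: "closed_set P {t. (x, t) \<in> reach P}"
    unfolding closed_set_def reach_def by (auto intro: rtrancl_into_rtrancl)
  obtain r where r: "(x, r) \<in> reach P" "recurrent P r"
    using closed_has_recurrent[OF cl, of x] by auto
  have "s' \<in> {t. (r, t) \<in> reach P}"
    using unichain_classes_eq[OF assms(1) r(2) assms(2)] by auto
  then have "(r, s') \<in> reach P" by simp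
  with r(1) show ?thesis using reach_trans by metis
qed

lemma max_closed:
  fixes x :: "'s::finite \<Rightarrow> real"
  assumes P: "stochastic P" and sub: "\<And>s. x s \<le> mv P x s"
  shows "closed_set P {s. x s = Max (range x)}"
  unfolding closed_set_def
proof (intro allI impI)
  fix s t assume s: "s \<in> {s. x s = Max (range x)}" and pst: "0 < P s t"
  define m where "m = Max (range x)"
  have le: "x u \<le> m" for u unfolding m_def by (rule Max_ge) auto
  show "t \<in> {s. x s = Max (range x)}"
  proof (rule ccontr)
    assume "t \<notin> {s. x s = Max (range x)}"
    then have "x t \<noteq> m" unfolding m_def by simp
    then have xt: "x t < m" using le[of t] by simp
    have "m - mv P x s = (\<Sum>u\<in>UNIV. P s u * (m - x u))"
      using P unfolding mv_def stochastic_def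
      by (simp add: right_diff_distrib sum_subtractf sum_distrib_right[symmetric])
    also have "\<dots> \<ge> P s t * (m - x t)"
      by (rule member_le_sum) (use le stoch_nonneg[OF P] in auto)
    finally have "0 < m - mv P x s" using pst xt
      by (smt (verit) mult_pos_pos)
    moreover have "x s = m" using s unfolding m_def by simp
    ultimately show False using sub[of s] by simp
  qed
qed

lemma min_closed:
  fixes x :: "'s::finite \<Rightarrow> real"
  assumes P: "stochastic P" and sup: "\<And>s. mv P x s \<le> x s"
  shows "closed_set P {s. x s = Min (range x)}"
  unfolding closed_set_def
proof (intro allI impI)
  fix s t assume s: "s \<in> {s. x s = Min (range x)}" and pst: "0 < P s t"
  define m where "m = Min (range x)"
  have le: "m \<le> x u" for u unfolding m_def by (rule Min_le) auto
  show "t \<in> {s. x s = Min (range x)}"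
  proof (rule ccontr)
    assume "t \<notin> {s. x s = Min (range x)}"
    then have "x t \<noteq> m" unfolding m_def by simp
    then have xt: "m < x t" using le[of t] by simp
    have "mv P x s - m = (\<Sum>u\<in>UNIV. P s u * (x u - m))"
      using P unfolding mv_def stochastic_def
      by (simp add: right_diff_distrib sum_subtractf sum_distrib_right[symmetric])
    also have "\<dots> \<ge> P s t * (x t - m)"
      by (rule member_le_sum) (use le stoch_nonneg[OF P] in auto)
    finally have "0 < mv P x s - m" using pst xt
      by (smt (verit) mult_pos_pos)
    moreover have "x s = m" using s unfolding m_def by simp
    ultimately show False using sup[of s] by simp
  qed
qed

lemma Max_range_in: "Max (range (x::'s::finite \<Rightarrow> real)) \<in> range x"
  by (rule Max_in) auto

lemma Min_range_in: "Min (range (x::'s::finite \<Rightarrow> real)) \<in> range x"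
  by (rule Min_in) auto

lemma maxmin_const:
  fixes x :: "'s::finite \<Rightarrow> real"
  assumes "{s. x s = Max (range x)} \<inter> {s. x s = Min (range x)} \<noteq> {}"
  shows "x s = x t"
proof -
  obtain u where "x u = Max (range x)" "x u = Min (range x)" using assms by auto
  moreover have "x v \<le> Max (range x)" "Min (range x) \<le> x v" for v
    by (auto intro: Max_ge Min_le)
  ultimately show ?thesis by (metis order_antisym)
qed

lemma harmonic_const:
  fixes x :: "'s::finite \<Rightarrow> real"
  assumes P: "stochastic P" "unichain_chain P" and h: "\<And>s. mv P x s = x s"
  shows "x s = x t"
proof (rule maxmin_const)
  obtain a where a: "x a = Max (range x)" using Max_range_in by (metis imageE)
  obtain b where b: "x b = Min (range x)" using Min_range_in by (metis imageE)
  have c1: "closed_set P {s. x s = Max (range x)}" by (rule max_closed[OF P(1)]) (simp add: h)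
  have c2: "closed_set P {s. x s = Min (range x)}" by (rule min_closed[OF P(1)]) (simp add: h)
  show "{s. x s = Max (range x)} \<inter> {s. x s = Min (range x)} \<noteq> {}"
    by (rule unichain_closed_inter[OF P(2) c1 c2]) (use a b in auto)
qed

lemma no_const_range:
  fixes y :: "'s::finite \<Rightarrow> real"
  assumes P: "stochastic P" and h: "\<And>s. y s - mv P y s = c"
  shows "c = 0"
proof -
  obtain a where a: "y a = Max (range y)" using Max_range_in by (metis imageE)
  obtain b where b: "y b = Min (range y)" using Min_range_in by (metis imageE)
  have "mv P y a \<le> y a" by (rule mv_bound_le[OF P]) (use a in \<open>auto intro: Max_ge\<close>)
  moreover have "y b \<le> mv P y b" by (rule mv_bound_ge[OF P]) (use b in \<open>auto intro: Min_le\<close>)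
  ultimately show ?thesis using h[of a] h[of b] by linarith
qed

lemma decomp:
  fixes P :: "'s::finite \<Rightarrow> 's \<Rightarrow> real"
  assumes P: "stochastic P" "unichain_chain P"
  shows "\<exists>c y. \<forall>s. v s = c + (y s - mv P y s)"
proof -
  fix s0 :: 's
  define \<phi> :: "real^'s \<Rightarrow> real^'s" where
    "\<phi> z = (\<chi> s. vec_nth z s - mv P (vec_nth z) s + vec_nth z s0)" for z
  have lin: "linear \<phi>"
  proof (rule linearI)
    fix a b :: "real^'s"
    show "\<phi> (a + b) = \<phi> a + \<phi> b"
    proof -
      have "vec_nth (a + b) = (\<lambda>t. a $ t + b $ t)" by auto
      then show ?thesis unfolding \<phi>_def by (simp add: vec_eq_iff mv_add)
    qed
  next
    fix r :: real and a :: "real^'s"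
    show "\<phi> (r *\<^sub>R a) = r *\<^sub>R \<phi> a"
    proof -
      have "vec_nth (r *\<^sub>R a) = (\<lambda>t. r * a $ t)" by auto
      then show ?thesis unfolding \<phi>_def by (simp add: vec_eq_iff mv_scale algebra_simps)
    qed
  qed
  have "inj \<phi>"
    unfolding linear_injective_0[OF lin]
  proof (intro allI impI)
    fix z assume z0: "\<phi> z = 0"
    define y where "y = vec_nth z"
    have e: "y s - mv P y s + y s0 = 0" for s
      using z0 unfolding \<phi>_def y_def by (simp add: vec_eq_iff)
    have "- y s0 = 0" by (rule no_const_range[OF P(1)]) (use e in \<open>auto simp: algebra_simps\<close>)
    then have y0: "y s0 = 0" by simp
    have hh: "mv P y s = y s" for s using e[of s] y0 by simp
    have "y s = y s0" for s
      by (rule harmonic_const[OF P hh])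
    then show "z = 0" using y0 unfolding y_def by (simp add: vec_eq_iff)
  qed
  then have "surj \<phi>" using eucl.linear_inj_imp_surj[OF lin] by blast
  then obtain z where "\<phi> z = vec_lambda v" by (metis surjE)
  then have "v s = vec_nth z s0 + (vec_nth z s - mv P (vec_nth z) s)" for s
    unfolding \<phi>_def by (simp add: vec_eq_iff) (metis add.commute)
  then show ?thesis by blast
qed

definition ces :: "('s::finite \<Rightarrow> 's \<Rightarrow> real) \<Rightarrow> ('s \<Rightarrow> real) \<Rightarrow> 's \<Rightarrow> nat \<Rightarrow> real" where
  "ces P v s n = (\<Sum>k<n. mv (mat_pow P k) v s) / real n"

definition mu :: "('s::finite \<Rightarrow> 's \<Rightarrow> real) \<Rightarrow> 's \<Rightarrow> real" where
  "mu P t = lim (ces P (\<lambda>u. if u = t then 1 else 0) undefined)"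

lemma mv_id[simp]: "mv (\<lambda>a b. if a = b then 1 else 0) v = v"
  using mv_0[of undefined v] by simp

lemma mv_pow_comm: "mv (mat_pow M k) (mv M y) s = mv (mat_pow M (Suc k)) y s"
proof (induction k arbitrary: s)
  case 0 then show ?case by (simp only: mv_Suc mv_0)
next
  case (Suc k)
  have e: "mv (mat_pow M k) (mv M y) = mv (mat_pow M (Suc k)) y" using Suc.IH by auto
  have "mv (mat_pow M (Suc k)) (mv M y) s = mv M (mv (mat_pow M k) (mv M y)) s" by (rule mv_Suc)
  also have "\<dots> = mv M (mv (mat_pow M (Suc k)) y) s" by (simp only: e)
  also have "\<dots> = mv (mat_pow M (Suc (Suc k))) y s" by (rule mv_Suc[symmetric])
  finally show ?case .
qed

lemma telesc: "(\<Sum>k<n. mv (mat_pow M k) (\<lambda>t. y t - mv M y t) s) = y s - mv (mat_pow M n) y s"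
proof (induction n)
  case 0 then show ?case by simp
next
  case (Suc n)
  have "mv (mat_pow M n) (\<lambda>t. y t - mv M y t) s = mv (mat_pow M n) y s - mv (mat_pow M (Suc n)) y s"
    by (simp add: mv_diff mv_pow_comm)
  then show ?case using Suc by simp
qed

lemma mv_delta: "mv M (\<lambda>u. if u = t then 1 else 0) s = M s t"
proof -
  have "mv M (\<lambda>u. if u = t then 1 else 0) s = (\<Sum>u\<in>UNIV. if u = t then M s u else 0)"
    unfolding mv_def by (rule sum.cong) auto
  then show ?thesis by simp
qed

lemma bounded_over_n:
  assumes "\<And>n. \<bar>f n\<bar> \<le> B"
  shows "(\<lambda>n. f n / real n) \<longlonglongrightarrow> 0"
proof (rule Lim_null_comparison)
  show "\<forall>\<^sub>F n in sequentially. norm (f n / real n) \<le> B / real n"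
    using assms by (auto intro!: eventuallyI divide_right_mono simp: abs_divide)
  show "(\<lambda>n. B / real n) \<longlonglongrightarrow> 0" by (rule lim_const_over_n)
qed

lemma pow_bound:
  fixes y :: "'s::finite \<Rightarrow> real"
  assumes "stochastic P"
  shows "\<bar>mv (mat_pow P n) y s\<bar> \<le> Max (range (\<lambda>t. \<bar>y t\<bar>))"
  by (rule mv_bound_abs[OF stoch_pow[OF assms]]) (auto intro: Max_ge)

lemma ces_const_add:
  assumes "stochastic P"
  shows "(\<Sum>k<n. mv (mat_pow P k) (\<lambda>t. c + w t) s) = real n * c + (\<Sum>k<n. mv (mat_pow P k) w s)"
  by (simp add: mv_add mv_pow_const[OF assms] sum.distrib)

lemma ces_conv:
  fixes P :: "'s::finite \<Rightarrow> 's \<Rightarrow> real"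
  assumes P: "stochastic P" "unichain_chain P"
  shows "\<exists>c. \<forall>s. ces P v s \<longlonglongrightarrow> c"
proof -
  obtain c y where cy: "\<And>s. v s = c + (y s - mv P y s)" using decomp[OF P] by blast
  define B where "B = Max (range (\<lambda>t. \<bar>y t\<bar>))"
  have "ces P v s \<longlonglongrightarrow> c" for s
  proof -
    have vv: "v = (\<lambda>t. c + (y t - mv P y t))" using cy by auto
    have eq: "ces P v s n - c = (y s - mv (mat_pow P n) y s) / real n" if "n > 0" for n
      unfolding ces_def vv ces_const_add[OF P(1)] telesc using that
      by (simp add: field_simps)
    have "(\<lambda>n. (y s - mv (mat_pow P n) y s) / real n) \<longlonglongrightarrow> 0"
    proof (rule bounded_over_n)
      fix n
      have "\<bar>y s\<bar> \<le> B" unfolding B_def by (auto intro: Max_ge)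
      moreover have "\<bar>mv (mat_pow P n) y s\<bar> \<le> B" unfolding B_def by (rule pow_bound[OF P(1)])
      ultimately show "\<bar>y s - mv (mat_pow P n) y s\<bar> \<le> 2 * B" by linarith
    qed
    then have "(\<lambda>n. ces P v s n - c) \<longlonglongrightarrow> 0"
      by (rule Lim_transform_eventually) (use eq in \<open>auto intro!: eventually_sequentiallyI[of 1]\<close>)
    then show ?thesis by (rule LIM_zero_cancel)
  qed
  then show ?thesis by blast
qed

lemma ces_delta_mu:
  fixes P :: "'s::finite \<Rightarrow> 's \<Rightarrow> real"
  assumes P: "stochastic P" "unichain_chain P"
  shows "ces P (\<lambda>u. if u = t then 1 else 0) s \<longlonglongrightarrow> mu P t"
proof -
  obtain c where c: "\<And>s. ces P (\<lambda>u. if u = t then 1 else 0) s \<longlonglongrightarrow> c"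
    using ces_conv[OF P] by blast
  have "mu P t = c" unfolding mu_def using c by (rule limI)
  then show ?thesis using c by simp
qed

lemma ces_lin: "ces P v s n = (\<Sum>t\<in>UNIV. v t * ces P (\<lambda>u. if u = t then 1 else 0) s n)"
proof -
  have "(\<Sum>k<n. mv (mat_pow P k) v s) = (\<Sum>t\<in>UNIV. v t * (\<Sum>k<n. mv (mat_pow P k) (\<lambda>u. if u = t then 1 else 0) s))"
    unfolding mv_delta unfolding mv_def
    by (simp add: sum_distrib_left ac_simps) (rule sum.swap)
  then show ?thesis unfolding ces_def by (simp add: times_divide_eq_right sum_divide_distrib[symmetric])
qed

lemma ces_mu:
  fixes P :: "'s::finite \<Rightarrow> 's \<Rightarrow> real"
  assumes P: "stochastic P" "unichain_chain P"
  shows "ces P v s \<longlonglongrightarrow> (\<Sum>t\<in>UNIV. mu P t * v t)"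
proof -
  have "(\<lambda>n. \<Sum>t\<in>UNIV. v t * ces P (\<lambda>u. if u = t then 1 else 0) s n) \<longlonglongrightarrow> (\<Sum>t\<in>UNIV. v t * mu P t)"
    by (intro tendsto_intros ces_delta_mu[OF P])
  then show ?thesis by (simp add: ces_lin[symmetric] mult.commute)
qed

lemma mu_nonneg:
  fixes P :: "'s::finite \<Rightarrow> 's \<Rightarrow> real"
  assumes P: "stochastic P" "unichain_chain P"
  shows "0 \<le> mu P t"
proof (rule LIMSEQ_le_const[OF ces_delta_mu[OF P, of t undefined]])
  show "\<exists>N. \<forall>n\<ge>N. 0 \<le> ces P (\<lambda>u. if u = t then 1 else 0) undefined n"
    unfolding ces_def mv_delta
    using mat_pow_nonneg[of P] stoch_nonneg[OF P(1)] by (auto intro!: divide_nonneg_nonneg sum_nonneg)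
qed

lemma ces_const:
  assumes "stochastic P" "n > 0"
  shows "ces P (\<lambda>_. c) s n = c"
  unfolding ces_def using assms by (simp add: mv_pow_const)

lemma mu_sum:
  fixes P :: "'s::finite \<Rightarrow> 's \<Rightarrow> real"
  assumes P: "stochastic P" "unichain_chain P"
  shows "(\<Sum>t\<in>UNIV. mu P t) = 1"
proof -
  have a: "ces P (\<lambda>_. 1) s \<longlonglongrightarrow> (\<Sum>t\<in>UNIV. mu P t * 1)" by (rule ces_mu[OF P])
  have "ces P (\<lambda>_. 1) s \<longlonglongrightarrow> 1"
    by (rule Lim_transform_eventually[OF tendsto_const])
       (auto intro!: eventually_sequentiallyI[of 1] simp: ces_const[OF P(1)])
  with a show ?thesis using LIMSEQ_unique by fastforce
qed

lemma mu_stat: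
  fixes P :: "'s::finite \<Rightarrow> 's \<Rightarrow> real"
  assumes P: "stochastic P" "unichain_chain P"
  shows "(\<Sum>t\<in>UNIV. mu P t * mv P v t) = (\<Sum>t\<in>UNIV. mu P t * v t)"
proof -
  fix s :: 's
  define B where "B = Max (range (\<lambda>t. \<bar>v t\<bar>))"
  have eq: "ces P (mv P v) s n - ces P v s n = (mv (mat_pow P n) v s - v s) / real n" for n
  proof -
    have "(\<Sum>k<n. mv (mat_pow P k) (mv P v) s) = (\<Sum>k<n. mv (mat_pow P (Suc k)) v s)"
      by (simp add: mv_pow_comm)
    also have "\<dots> = (\<Sum>k<n. mv (mat_pow P k) v s) + mv (mat_pow P n) v s - v s"
      by (induction n) auto
    finally show ?thesis unfolding ces_def by (simp add: diff_divide_distrib add_divide_distrib)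
  qed
  have "(\<lambda>n. (mv (mat_pow P n) v s - v s) / real n) \<longlonglongrightarrow> 0"
  proof (rule bounded_over_n)
    fix n
    have "\<bar>v s\<bar> \<le> B" unfolding B_def by (auto intro: Max_ge)
    moreover have "\<bar>mv (mat_pow P n) v s\<bar> \<le> B" unfolding B_def by (rule pow_bound[OF P(1)])
    ultimately show "\<bar>mv (mat_pow P n) v s - v s\<bar> \<le> 2 * B" by linarith
  qed
  then have z: "(\<lambda>n. ces P (mv P v) s n - ces P v s n) \<longlonglongrightarrow> 0" by (simp only: eq)
  have "(\<lambda>n. ces P (mv P v) s n - ces P v s n) \<longlonglongrightarrow>
        (\<Sum>t\<in>UNIV. mu P t * mv P v t) - (\<Sum>t\<in>UNIV. mu P t * v t)"
    by (intro tendsto_diff ces_mu[OF P])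
  with z have "(\<Sum>t\<in>UNIV. mu P t * mv P v t) - (\<Sum>t\<in>UNIV. mu P t * v t) = 0"
    using LIMSEQ_unique by blast
  then show ?thesis by simp
qed

lemma stat_pow:
  fixes \<nu> :: "'s::finite \<Rightarrow> real"
  assumes st: "\<And>u. (\<Sum>t\<in>UNIV. \<nu> t * P t u) = \<nu> u"
  shows "(\<Sum>t\<in>UNIV. \<nu> t * mv (mat_pow P k) w t) = (\<Sum>t\<in>UNIV. \<nu> t * w t)"
proof (induction k)
  case 0 then show ?case by simp
next
  case (Suc k)
  have one: "(\<Sum>t\<in>UNIV. \<nu> t * mv P z t) = (\<Sum>t\<in>UNIV. \<nu> t * z t)" for z
  proof -
    have "(\<Sum>t\<in>UNIV. \<nu> t * mv P z t) = (\<Sum>t\<in>UNIV. \<Sum>u\<in>UNIV. \<nu> t * P t u * z u)"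
      unfolding mv_def by (simp add: sum_distrib_left ac_simps)
    also have "\<dots> = (\<Sum>u\<in>UNIV. \<Sum>t\<in>UNIV. \<nu> t * P t u * z u)" by (rule sum.swap)
    also have "\<dots> = (\<Sum>u\<in>UNIV. (\<Sum>t\<in>UNIV. \<nu> t * P t u) * z u)" by (simp add: sum_distrib_right)
    also have "\<dots> = (\<Sum>u\<in>UNIV. \<nu> u * z u)" by (simp add: st)
    finally show ?thesis .
  qed
  have "(\<Sum>t\<in>UNIV. \<nu> t * mv (mat_pow P (Suc k)) w t) = (\<Sum>t\<in>UNIV. \<nu> t * mv P (mv (mat_pow P k) w) t)"
    by (simp only: mv_Suc)
  also have "\<dots> = (\<Sum>t\<in>UNIV. \<nu> t * mv (mat_pow P k) w t)" by (rule one)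
  finally show ?case using Suc by simp
qed

lemma mu_unique:
  fixes P :: "'s::finite \<Rightarrow> 's \<Rightarrow> real"
  assumes P: "stochastic P" "unichain_chain P"
    and s1: "(\<Sum>t\<in>UNIV. \<nu> t) = 1" and st: "\<And>u. (\<Sum>t\<in>UNIV. \<nu> t * P t u) = \<nu> u"
  shows "\<nu> u = mu P u"
proof -
  define w where "w = (\<lambda>t::'s. if t = u then 1 else (0::real))"
  have c: "(\<Sum>t\<in>UNIV. \<nu> t * ces P w t n) = (\<Sum>t\<in>UNIV. \<nu> t * w t)" if "n > 0" for n
  proof -
    have "(\<Sum>t\<in>UNIV. \<nu> t * ces P w t n) = (\<Sum>k<n. \<Sum>t\<in>UNIV. \<nu> t * mv (mat_pow P k) w t) / real n"
      unfolding ces_def by (simp add: sum_divide_distrib sum_distrib_left) (rule sum.swap)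
    also have "\<dots> = (\<Sum>t\<in>UNIV. \<nu> t * w t)" using that by (simp add: stat_pow[OF st])
    finally show ?thesis .
  qed
  have "(\<lambda>n. \<Sum>t\<in>UNIV. \<nu> t * ces P w t n) \<longlonglongrightarrow> (\<Sum>t\<in>UNIV. \<nu> t * (\<Sum>t'\<in>UNIV. mu P t' * w t'))"
    by (intro tendsto_intros ces_mu[OF P])
  moreover have "(\<lambda>n. \<Sum>t\<in>UNIV. \<nu> t * ces P w t n) \<longlonglongrightarrow> (\<Sum>t\<in>UNIV. \<nu> t * w t)"
    by (rule Lim_transform_eventually[OF tendsto_const]) (auto intro!: eventually_sequentiallyI[of 1] simp: c)
  ultimately have "(\<Sum>t\<in>UNIV. \<nu> t * w t) = (\<Sum>t\<in>UNIV. \<nu> t) * (\<Sum>t'\<in>UNIV. mu P t' * w t')"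
    using LIMSEQ_unique by (fastforce simp: sum_distrib_right)
  then show ?thesis using s1 unfolding w_def by (simp add: if_distrib cong: if_cong)
qed

lemma poisson_exists:
  fixes P :: "'s::finite \<Rightarrow> 's \<Rightarrow> real"
  assumes P: "stochastic P" "unichain_chain P"
  shows "\<exists>g h. \<forall>s. g + h s = r s + mv P h s"
proof -
  obtain c y where "\<And>s. r s = c + (y s - mv P y s)" using decomp[OF P] by blast
  then have "\<forall>s. c + y s = r s + mv P y s" by (simp add: algebra_simps)
  then show ?thesis by blast
qed

lemma poisson_gain:
  fixes P :: "'s::finite \<Rightarrow> 's \<Rightarrow> real"
  assumes P: "stochastic P" "unichain_chain P" and pe: "\<And>s. g + h s = r s + mv P h s"
  shows "gain P r s = g"
proof -
  have "ces P r s \<longlonglongrightarrow> (\<Sum>t\<in>UNIV. mu P t * r t)" by (rule ces_mu[OF P])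
  moreover have "(\<Sum>t\<in>UNIV. mu P t * r t) = g"
  proof -
    have r: "r t = g + h t - mv P h t" for t using pe[of t] by simp
    have "(\<Sum>t\<in>UNIV. mu P t * r t) = g * (\<Sum>t\<in>UNIV. mu P t) + (\<Sum>t\<in>UNIV. mu P t * h t) - (\<Sum>t\<in>UNIV. mu P t * mv P h t)"
      unfolding r by (simp add: algebra_simps sum.distrib sum_subtractf sum_distrib_left)
    then show ?thesis using mu_stat[OF P, of h] mu_sum[OF P] by simp
  qed
  ultimately have "ces P r s \<longlonglongrightarrow> g" by simp
  then show ?thesis unfolding gain_def ces_def[symmetric] by (rule limI)
qed

lemma poisson_bias:
  fixes P :: "'s::finite \<Rightarrow> 's \<Rightarrow> real"
  assumes P: "stochastic P" "unichain_chain P" and pe: "\<And>s. g + h s = r s + mv P h s"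
  shows "bias P r s = h s - (\<Sum>t\<in>UNIV. mu P t * h t)"
proof -
  have gg: "gain P r u = g" for u by (rule poisson_gain[OF P pe])
  have ru: "(\<lambda>u. r u - gain P r u) = (\<lambda>u. h u - mv P h u)" using pe by (auto simp: gg algebra_simps)
  have eq: "(\<Sum>n<N. \<Sum>k<n. mv (mat_pow P k) (\<lambda>u. r u - gain P r u) s) / real N = h s - ces P h s N"
    if "N > 0" for N
    unfolding ru telesc ces_def using that by (simp add: sum_subtractf field_simps)
  have "(\<lambda>N. h s - ces P h s N) \<longlonglongrightarrow> h s - (\<Sum>t\<in>UNIV. mu P t * h t)"
    by (intro tendsto_intros ces_mu[OF P])
  then have "(\<lambda>N. (\<Sum>n<N. \<Sum>k<n. mv (mat_pow P k) (\<lambda>u. r u - gain P r u) s) / real N)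
      \<longlonglongrightarrow> h s - (\<Sum>t\<in>UNIV. mu P t * h t)"
    by (rule Lim_transform_eventually) (auto intro!: eventually_sequentiallyI[of 1] simp: eq)
  then show ?thesis unfolding bias_def by (rule limI)
qed

definition qh :: "('s::finite \<Rightarrow> 's \<Rightarrow> real) \<Rightarrow> 's \<Rightarrow> nat \<Rightarrow> 's \<Rightarrow> real" where
  "qh P s' n x = (\<Sum>t\<in>UNIV. mat_pow (taboo P s') n x t)"

lemma taboo_nonneg: "stochastic P \<Longrightarrow> 0 \<le> taboo P s' u t"
  unfolding taboo_def using stoch_nonneg by auto

lemma qh_0[simp]: "qh P s' 0 x = 1"
  unfolding qh_def by simp

lemma qh_Suc: "qh P s' (Suc n) x = (\<Sum>u\<in>UNIV. taboo P s' x u * qh P s' n u)"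
  unfolding qh_def by (simp add: sum_distrib_left) (rule sum.swap)

lemma taboo_row: "stochastic P \<Longrightarrow> (\<Sum>u\<in>UNIV. taboo P s' x u) = 1 - P x s'"
proof -
  assume P: "stochastic P"
  have "(\<Sum>u\<in>UNIV. taboo P s' x u) = (\<Sum>u\<in>UNIV. P x u - (if u = s' then P x u else 0))"
    unfolding taboo_def by (rule sum.cong) auto
  also have "\<dots> = 1 - P x s'" using P unfolding stochastic_def by (simp add: sum_subtractf)
  finally show ?thesis .
qed

lemma qh_nonneg: "stochastic P \<Longrightarrow> 0 \<le> qh P s' n x"
  unfolding qh_def by (intro sum_nonneg mat_pow_nonneg taboo_nonneg)

lemma qh_le1: "stochastic P \<Longrightarrow> qh P s' n x \<le> 1"
proof (induction n arbitrary: x)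
  case 0 then show ?case by simp
next
  case (Suc n)
  have "qh P s' (Suc n) x \<le> (\<Sum>u\<in>UNIV. taboo P s' x u * 1)"
    unfolding qh_Suc by (intro sum_mono mult_left_mono Suc.IH Suc.prems taboo_nonneg)
  also have "\<dots> = 1 - P x s'" using taboo_row[OF Suc.prems] by simp
  also have "\<dots> \<le> 1" using stoch_nonneg[OF Suc.prems] by simp
  finally show ?case .
qed

lemma qh_Suc_le: "stochastic P \<Longrightarrow> qh P s' (Suc n) x \<le> qh P s' n x"
proof (induction n arbitrary: x)
  case 0 then show ?case using qh_le1 by simp
next
  case (Suc n)
  have "qh P s' (Suc (Suc n)) x \<le> (\<Sum>u\<in>UNIV. taboo P s' x u * qh P s' n u)"
    unfolding qh_Suc[of P s' "Suc n"] by (intro sum_mono mult_left_mono Suc.IH Suc.prems taboo_nonneg)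
  also have "\<dots> = qh P s' (Suc n) x" by (simp add: qh_Suc)
  finally show ?case .
qed

lemma qh_antimono: "stochastic P \<Longrightarrow> m \<le> n \<Longrightarrow> qh P s' n x \<le> qh P s' m x"
proof -
  assume P: "stochastic P" and mn: "m \<le> n"
  have "decseq (\<lambda>n. qh P s' n x)" by (rule decseq_SucI) (rule qh_Suc_le[OF P])
  then show ?thesis using mn by (simp add: decseq_def)
qed

lemma mat_pow_add: "mat_pow M (m + n) x t = (\<Sum>u\<in>UNIV. mat_pow M m x u * mat_pow M n u t)"
proof (induction m arbitrary: x)
  case 0
  have "(\<Sum>u\<in>UNIV. mat_pow M 0 x u * mat_pow M n u t) = (\<Sum>u\<in>UNIV. if u = x then mat_pow M n u t else 0)"
    by (rule sum.cong) auto
  then show ?case by simp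
next
  case (Suc m)
  have "mat_pow M (Suc m + n) x t = (\<Sum>v\<in>UNIV. M x v * mat_pow M (m + n) v t)" by simp
  also have "\<dots> = (\<Sum>v\<in>UNIV. \<Sum>u\<in>UNIV. M x v * (mat_pow M m v u * mat_pow M n u t))"
    by (simp add: Suc.IH sum_distrib_left)
  also have "\<dots> = (\<Sum>u\<in>UNIV. \<Sum>v\<in>UNIV. M x v * (mat_pow M m v u * mat_pow M n u t))"
    by (rule sum.swap)
  also have "\<dots> = (\<Sum>u\<in>UNIV. mat_pow M (Suc m) x u * mat_pow M n u t)"
    by (simp only: mat_pow.simps sum_distrib_right mult.assoc)
  finally show ?case .
qed

lemma qh_add: "qh P s' (m + n) x = (\<Sum>u\<in>UNIV. mat_pow (taboo P s') m x u * qh P s' n u)"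
  unfolding qh_def mat_pow_add by (simp add: sum_distrib_left) (rule sum.swap)

lemma qh_strict_trancl:
  fixes P :: "'s::finite \<Rightarrow> 's \<Rightarrow> real"
  assumes P: "stochastic P" and tr: "(x, s') \<in> {(a, b). 0 < P a b}\<^sup>+"
  shows "\<exists>n. qh P s' n x < 1"
  using tr
proof (induction rule: converse_trancl_induct)
  case (base y)
  then have "qh P s' (Suc 0) y = 1 - P y s'" using taboo_row[OF P] by (simp add: qh_Suc)
  then show ?case using base by (intro exI[of _ "Suc 0"]) auto
next
  case (step y z)
  show ?case
  proof (cases "z = s'")
    case True
    then have "qh P s' (Suc 0) y = 1 - P y s'" using taboo_row[OF P] by (simp add: qh_Suc)
    then show ?thesis using step True by (intro exI[of _ "Suc 0"]) auto
  next
    case False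
    obtain n where n: "qh P s' n z < 1" using step by blast
    have tz: "0 < taboo P s' y z" using step False unfolding taboo_def by auto
    have "(\<Sum>u\<in>UNIV. taboo P s' y u) - qh P s' (Suc n) y = (\<Sum>u\<in>UNIV. taboo P s' y u * (1 - qh P s' n u))"
      by (simp add: qh_Suc algebra_simps sum_subtractf)
    also have "\<dots> \<ge> taboo P s' y z * (1 - qh P s' n z)"
      by (rule member_le_sum) (auto intro!: mult_nonneg_nonneg taboo_nonneg[OF P] simp: qh_le1[OF P])
    finally have "qh P s' (Suc n) y < (\<Sum>u\<in>UNIV. taboo P s' y u)"
      using tz n by (smt (verit) mult_pos_pos)
    also have "\<dots> \<le> 1" using taboo_row[OF P] stoch_nonneg[OF P] by simp
    finally show ?thesis by blast
  qed
qed

lemma stoch_row_pos: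
  fixes P :: "'s::finite \<Rightarrow> 's \<Rightarrow> real"
  assumes "stochastic P" shows "\<exists>t. 0 < P x t"
proof (rule ccontr)
  assume "\<not> ?thesis"
  then have "(\<Sum>t\<in>UNIV. P x t) \<le> 0" by (intro sum_nonpos) (auto simp: not_less)
  then show False using assms unfolding stochastic_def by simp
qed

lemma all_trancl_rec:
  fixes P :: "'s::finite \<Rightarrow> 's \<Rightarrow> real"
  assumes P: "stochastic P" "unichain_chain P" and rec: "recurrent P s'"
  shows "(x, s') \<in> {(a, b). 0 < P a b}\<^sup>+"
proof (cases "x = s'")
  case False
  have "(x, s') \<in> {(a, b). 0 < P a b}\<^sup>*" using unichain_reach_rec[OF P(2) rec] unfolding reach_def .
  then show ?thesis using False by (simp add: rtrancl_eq_or_trancl)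
next
  case True
  obtain t where t: "0 < P s' t" using stoch_row_pos[OF P(1)] by blast
  have "(s', t) \<in> reach P" unfolding reach_def using t by auto
  then have "(t, s') \<in> reach P" using rec unfolding recurrent_def by blast
  then have "(s', s') \<in> {(a, b). 0 < P a b}\<^sup>+"
    unfolding reach_def using t by (intro rtrancl_into_trancl2) auto
  then show ?thesis using True by simp
qed

lemma qh_summable:
  fixes P :: "'s::finite \<Rightarrow> 's \<Rightarrow> real"
  assumes P: "stochastic P" "unichain_chain P" and rec: "recurrent P s'"
  shows "summable (\<lambda>n. qh P s' n x)"
proof -
  have "\<forall>x. \<exists>n. qh P s' n x < 1"
    using qh_strict_trancl[OF P(1) all_trancl_rec[OF P rec]] by blast
  then obtain nf where nf: "\<And>x. qh P s' (nf x) x < 1" by metis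
  define N where "N = Max (range nf)"
  have qN: "qh P s' N y < 1" for y
  proof -
    have "nf y \<le> N" unfolding N_def by (rule Max_ge) auto
    then show ?thesis using qh_antimono[OF P(1), of "nf y" N s' y] nf[of y] by simp
  qed
  define \<rho> where "\<rho> = max (1/2) (Max (range (\<lambda>y. qh P s' N y)))"
  have \<rho>1: "\<rho> < 1"
  proof -
    have "Max (range (\<lambda>y. qh P s' N y)) \<in> range (\<lambda>y. qh P s' N y)" by (rule Max_in) auto
    then show ?thesis unfolding \<rho>_def using qN by auto
  qed
  have \<rho>0: "0 < \<rho>" unfolding \<rho>_def by simp
  have qNr: "qh P s' N y \<le> \<rho>" for y
  proof -
    have "qh P s' N y \<le> Max (range (\<lambda>y. qh P s' N y))" by (rule Max_ge) auto
    then show ?thesis unfolding \<rho>_def by linarith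
  qed
  have N0: "N > 0" using qN[of x] by (cases N) auto
  have geo: "qh P s' (k * N) y \<le> \<rho> ^ k" for k y
  proof (induction k arbitrary: y)
    case 0 then show ?case by simp
  next
    case (Suc k)
    have "qh P s' (Suc k * N) y = (\<Sum>u\<in>UNIV. mat_pow (taboo P s') (k * N) y u * qh P s' N u)"
      by (simp add: qh_add[symmetric] add.commute)
    also have "\<dots> \<le> (\<Sum>u\<in>UNIV. mat_pow (taboo P s') (k * N) y u * \<rho>)"
      by (intro sum_mono mult_left_mono qNr mat_pow_nonneg taboo_nonneg[OF P(1)])
    also have "\<dots> = \<rho> * qh P s' (k * N) y" unfolding qh_def by (simp add: sum_distrib_left ac_simps)
    also have "\<dots> \<le> \<rho> * \<rho> ^ k" using Suc.IH \<rho>0 by (intro mult_left_mono) auto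
    finally show ?case by simp
  qed
  define \<theta> where "\<theta> = root N \<rho>"
  have \<theta>N: "\<theta> ^ N = \<rho>" unfolding \<theta>_def using N0 \<rho>0 by (simp add: real_root_pow_pos2)
  have \<theta>0: "0 < \<theta>" unfolding \<theta>_def using N0 \<rho>0 by simp
  have \<theta>1: "\<theta> < 1" unfolding \<theta>_def using N0 \<rho>1 by simp
  have bnd: "norm (qh P s' n x) \<le> \<theta> ^ n / \<rho>" if "N \<le> n" for n
  proof -
    have "qh P s' n x \<le> qh P s' ((n div N) * N) x"
      by (rule qh_antimono[OF P(1)]) simp
    also have "\<dots> \<le> \<rho> ^ (n div N)" by (rule geo)
    also have "\<dots> = \<theta> ^ (N * (n div N))" by (simp add: \<theta>N[symmetric] power_mult)
    also have "\<dots> \<le> \<theta> ^ (n - N)"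
    proof (rule power_decreasing)
      have "n < N * (n div N) + N" using N0
        by (metis add.commute div_mult_mod_eq mod_less_divisor nat_add_left_cancel_less mult.commute)
      then show "n - N \<le> N * (n div N)" by linarith
    qed (use \<theta>0 \<theta>1 in auto)
    also have "\<dots> = \<theta> ^ n / \<rho>"
    proof -
      have "\<theta> ^ (n - N) * \<theta> ^ N = \<theta> ^ n" using that by (simp add: power_add[symmetric])
      then show ?thesis using \<theta>N \<rho>0 by (simp add: field_simps)
    qed
    finally show ?thesis using qh_nonneg[OF P(1)] by simp
  qed
  have "summable (\<lambda>n. \<theta> ^ n / \<rho>)"
    by (intro summable_divide summable_geometric) (use \<theta>0 \<theta>1 in auto)
  then show ?thesis using bnd by (rule summable_comparison_test')
qed

lemma mv_abs_le:
  assumes "\<And>s t. 0 \<le> M s t" "\<And>t. \<bar>f t\<bar> \<le> B"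
  shows "\<bar>mv M f y\<bar> \<le> B * (\<Sum>t\<in>UNIV. M y t)"
proof -
  have "\<bar>mv M f y\<bar> \<le> (\<Sum>t\<in>UNIV. \<bar>M y t * f t\<bar>)" unfolding mv_def by (rule sum_abs)
  also have "\<dots> \<le> (\<Sum>t\<in>UNIV. M y t * B)"
    using assms by (intro sum_mono) (auto simp: abs_mult intro: mult_left_mono)
  finally show ?thesis by (simp add: sum_distrib_left ac_simps)
qed

lemma hit_bound:
  fixes P :: "'s::finite \<Rightarrow> 's \<Rightarrow> real"
  assumes P: "stochastic P" "unichain_chain P" and rec: "recurrent P s'"
    and pe: "\<And>x. g + h x = r x + mv P h x" and fb: "\<And>x. \<bar>r x - g\<bar> \<le> 1"
  shows "\<bar>h x - h s'\<bar> \<le> exp_hit P x s'"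
proof (cases "x = s'")
  case True
  then show ?thesis unfolding exp_hit_def by simp
next
  case False
  define u where "u y = h y - h s'" for y
  define f where "f y = r y - g" for y
  define Q where "Q = taboo P s'"
  have Qnn: "0 \<le> Q a b" for a b unfolding Q_def by (rule taboo_nonneg[OF P(1)])
  have ueq: "u y = f y + mv Q u y" for y
  proof -
    have "mv Q u y = mv P u y"
      unfolding mv_def Q_def taboo_def by (rule sum.cong) (auto simp: u_def)
    also have "\<dots> = mv P h y - h s'"
      unfolding u_def by (simp add: mv_diff stoch_mv_const[OF P(1)])
    finally show ?thesis using pe[of y] unfolding u_def f_def by simp
  qed
  have iter: "u y = (\<Sum>k<n. mv (mat_pow Q k) f y) + mv (mat_pow Q n) u y" for n y
  proof (induction n arbitrary: y)
    case 0 then show ?case by simp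
  next
    case (Suc n)
    have e: "u = (\<lambda>z. (\<Sum>k<n. mv (mat_pow Q k) f z) + mv (mat_pow Q n) u z)" using Suc.IH by auto
    have "u y = f y + mv Q (\<lambda>z. (\<Sum>k<n. mv (mat_pow Q k) f z) + mv (mat_pow Q n) u z) y"
      using ueq[of y] e by metis
    also have "\<dots> = f y + (\<Sum>k<n. mv Q (mv (mat_pow Q k) f) y) + mv Q (mv (mat_pow Q n) u) y"
      by (simp add: mv_add mv_sum)
    also have "\<dots> = f y + (\<Sum>k<n. mv (mat_pow Q (Suc k)) f y) + mv (mat_pow Q (Suc n)) u y"
      by (simp only: mv_Suc)
    also have "\<dots> = (\<Sum>k<Suc n. mv (mat_pow Q k) f y) + mv (mat_pow Q (Suc n)) u y"
      by (simp only: sum.lessThan_Suc_shift mv_0)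
    finally show ?case .
  qed
  define B where "B = Max (range (\<lambda>t. \<bar>u t\<bar>))"
  have B: "\<bar>u t\<bar> \<le> B" for t unfolding B_def by (rule Max_ge) auto
  have sm: "summable (\<lambda>n. qh P s' n x)" by (rule qh_summable[OF P rec])
  have le: "\<bar>u x\<bar> \<le> suminf (\<lambda>n. qh P s' n x) + B * qh P s' n x" for n
  proof -
    have "\<bar>u x\<bar> \<le> \<bar>\<Sum>k<n. mv (mat_pow Q k) f x\<bar> + \<bar>mv (mat_pow Q n) u x\<bar>"
      using iter[of x n] abs_triangle_ineq by simp
    also have "\<dots> \<le> (\<Sum>k<n. \<bar>mv (mat_pow Q k) f x\<bar>) + \<bar>mv (mat_pow Q n) u x\<bar>"
      using sum_abs by simp
    also have "\<dots> \<le> (\<Sum>k<n. 1 * qh P s' k x) + B * qh P s' n x"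
      unfolding qh_def Q_def[symmetric]
      by (intro add_mono sum_mono mv_abs_le mat_pow_nonneg Qnn B) (auto simp: f_def fb)
    also have "(\<Sum>k<n. 1 * qh P s' k x) \<le> suminf (\<lambda>n. qh P s' n x)"
      using sum_le_suminf[OF sm, of "{..<n}"] qh_nonneg[OF P(1)] by simp
    finally show ?thesis by simp
  qed
  have lim: "(\<lambda>n. suminf (\<lambda>n. qh P s' n x) + B * qh P s' n x) \<longlonglongrightarrow> suminf (\<lambda>n. qh P s' n x) + B * 0"
    by (intro tendsto_intros summable_LIMSEQ_zero[OF sm])
  have "\<bar>u x\<bar> \<le> suminf (\<lambda>n. qh P s' n x)"
    using LIMSEQ_le_const[OF lim] le by simp
  moreover have "exp_hit P x s' = suminf (\<lambda>n. qh P s' n x)"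
    unfolding exp_hit_def qh_def using False by simp
  ultimately show ?thesis unfolding u_def by simp
qed

lemma exists_recurrent:
  fixes P :: "'s::finite \<Rightarrow> 's \<Rightarrow> real"
  shows "\<exists>s. recurrent P s"
  using closed_has_recurrent[of P UNIV] unfolding closed_set_def by blast

lemma diam_finite: "finite {exp_hit P s s' | s s'. recurrent P s'}"
  for P :: "'s::finite \<Rightarrow> 's \<Rightarrow> real"
proof (rule finite_subset)
  show "{exp_hit P s s' | s s'. recurrent P s'} \<subseteq> range (\<lambda>p. exp_hit P (fst p) (snd p))"
  proof
    fix z assume "z \<in> {exp_hit P s s' | s s'. recurrent P s'}"
    then obtain a b where "z = exp_hit P a b" by blast
    then have "z = (\<lambda>p. exp_hit P (fst p) (snd p)) (a, b)" by simp
    then show "z \<in> range (\<lambda>p. exp_hit P (fst p) (snd p))" by blast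
  qed
qed auto

lemma exp_hit_le_diam:
  fixes P :: "'s::finite \<Rightarrow> 's \<Rightarrow> real"
  assumes "recurrent P s'"
  shows "exp_hit P x s' \<le> diameter P"
  unfolding diameter_def by (rule Max_ge[OF diam_finite]) (use assms in blast)

lemma diam_nonneg:
  fixes P :: "'s::finite \<Rightarrow> 's \<Rightarrow> real"
  shows "0 \<le> diameter P"
proof -
  obtain s' where "recurrent P s'" using exists_recurrent by blast
  then have "exp_hit P s' s' \<le> diameter P" by (rule exp_hit_le_diam)
  then show ?thesis unfolding exp_hit_def by simp
qed

lemma span_bound:
  fixes P :: "'s::finite \<Rightarrow> 's \<Rightarrow> real"
  assumes P: "stochastic P" "unichain_chain P"
    and pe: "\<And>x. g + h x = r x + mv P h x" and fb: "\<And>x. \<bar>r x - g\<bar> \<le> 1"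
  shows "\<bar>h x - h y\<bar> \<le> 2 * diameter P"
proof -
  obtain s' where rec: "recurrent P s'" using exists_recurrent by blast
  have "\<bar>h x - h s'\<bar> \<le> diameter P"
    using hit_bound[OF P rec pe fb] exp_hit_le_diam[OF rec] order_trans by blast
  moreover have "\<bar>h y - h s'\<bar> \<le> diameter P"
    using hit_bound[OF P rec pe fb] exp_hit_le_diam[OF rec] order_trans by blast
  ultimately show ?thesis by linarith
qed

lemma mv_diff_span:
  fixes h :: "'s::finite \<Rightarrow> real"
  assumes A: "stochastic A" and B: "stochastic B" and sp: "\<And>x y. \<bar>h x - h y\<bar> \<le> K"
  shows "\<bar>mv A h s - mv B h s\<bar> \<le> K"
proof -
  define c where "c = Min (range h)"
  obtain a where a: "h a = c" unfolding c_def using Min_range_in by (metis imageE)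
  have lo: "c \<le> h t" for t unfolding c_def by (rule Min_le) auto
  have hi: "h t \<le> c + K" for t using sp[of t a] a by linarith
  have "c \<le> mv A h s" "mv A h s \<le> c + K" "c \<le> mv B h s" "mv B h s \<le> c + K"
    using mv_bound_ge[OF A, of c h] mv_bound_le[OF A, of h "c + K"]
      mv_bound_ge[OF B, of c h] mv_bound_le[OF B, of h "c + K"] lo hi by auto
  then show ?thesis by linarith
qed

lemma poisson_g:
  fixes P :: "'s::finite \<Rightarrow> 's \<Rightarrow> real"
  assumes P: "stochastic P" "unichain_chain P" and pe: "\<And>s. g + h s = r s + mv P h s"
  shows "g = (\<Sum>t\<in>UNIV. mu P t * r t)"
proof -
  have r: "r t = g + h t - mv P h t" for t using pe[of t] by simp
  have "(\<Sum>t\<in>UNIV. mu P t * r t) = g * (\<Sum>t\<in>UNIV. mu P t) + (\<Sum>t\<in>UNIV. mu P t * h t) - (\<Sum>t\<in>UNIV. mu P t * mv P h t)"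
    unfolding r by (simp add: algebra_simps sum.distrib sum_subtractf sum_distrib_left)
  then show ?thesis using mu_stat[OF P, of h] mu_sum[OF P] by simp
qed

lemma super_ge_mu:
  fixes P :: "'s::finite \<Rightarrow> 's \<Rightarrow> real"
  assumes P: "stochastic P" "unichain_chain P" and sup: "\<And>t. mv P x t \<le> x t"
  shows "(\<Sum>t\<in>UNIV. mu P t * x t) \<le> x s"
proof -
  have pk: "mv (mat_pow P k) x t \<le> x t" for k t
  proof (induction k arbitrary: t)
    case 0 then show ?case by simp
  next
    case (Suc k)
    have "mv (mat_pow P (Suc k)) x t = mv P (mv (mat_pow P k) x) t" by (rule mv_Suc)
    also have "\<dots> \<le> mv P x t" by (rule mv_mono) (auto intro: stoch_nonneg[OF P(1)] Suc.IH)
    also have "\<dots> \<le> x t" by (rule sup)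
    finally show ?case .
  qed
  have "ces P x s n \<le> x s" if "n > 0" for n
  proof -
    have "(\<Sum>k<n. mv (mat_pow P k) x s) \<le> (\<Sum>k<n. x s)" by (intro sum_mono pk)
    then show ?thesis unfolding ces_def using that by (simp add: divide_le_eq mult.commute)
  qed
  then show ?thesis using LIMSEQ_le_const2[OF ces_mu[OF P]] by (metis less_le_trans zero_less_one le_refl)
qed

locale mdp =
  fixes P0 P1 :: "'s::finite \<Rightarrow> 's \<Rightarrow> real" and r0 r1 :: "'s \<Rightarrow> real"
  assumes st0: "stochastic P0" and st1: "stochastic P1" and uni: "unichain P0 P1"
begin

abbreviation "PP \<pi> \<equiv> pol_P P0 P1 \<pi>"
abbreviation "RR l \<pi> \<equiv> pol_r r0 r1 l \<pi>"
abbreviation "M \<pi> \<equiv> mu (PP \<pi>)"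
definition "G l \<pi> = (\<Sum>t\<in>UNIV. M \<pi> t * RR l \<pi> t)"
abbreviation "H l \<pi> \<equiv> pbias P0 P1 r0 r1 l \<pi>"

lemma stP: "stochastic (PP \<pi>)"
proof -
  have "(\<Sum>t\<in>UNIV. pol_P P0 P1 \<pi> s t) = 1" for s
    by (cases "s \<in> \<pi>") (use st0 st1 in \<open>auto simp: pol_P_def stochastic_def\<close>)
  moreover have "0 \<le> pol_P P0 P1 \<pi> s t" for s t
    using st0 st1 unfolding pol_P_def stochastic_def by auto
  ultimately show ?thesis unfolding stochastic_def by blast
qed

lemma uniP: "unichain_chain (PP \<pi>)"
  using uni unfolding unichain_def by blast

lemmas PPs = stP uniP

lemma M_nonneg: "0 \<le> M \<pi> t" by (rule mu_nonneg[OF PPs])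
lemma M_sum: "(\<Sum>t\<in>UNIV. M \<pi> t) = 1" by (rule mu_sum[OF PPs])
lemma M_stat: "(\<Sum>t\<in>UNIV. M \<pi> t * mv (PP \<pi>) v t) = (\<Sum>t\<in>UNIV. M \<pi> t * v t)" by (rule mu_stat[OF PPs])

lemma H_char:
  assumes pe: "\<And>s. g + h s = RR l \<pi> s + mv (PP \<pi>) h s"
  shows "H l \<pi> s = h s - (\<Sum>t\<in>UNIV. M \<pi> t * h t)" "g = G l \<pi>"
  using poisson_bias[OF PPs pe] poisson_g[OF PPs pe] unfolding pbias_def G_def by auto

lemma pgain_eq: "pgain P0 P1 r0 r1 l \<pi> s = G l \<pi>"
proof -
  obtain g h where pe: "\<And>s. g + h s = RR l \<pi> s + mv (PP \<pi>) h s" using poisson_exists[OF PPs] by blast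
  show ?thesis unfolding pgain_def using poisson_gain[OF PPs pe] H_char(2)[OF pe] by simp
qed

lemma H_poisson: "G l \<pi> + H l \<pi> s = RR l \<pi> s + mv (PP \<pi>) (H l \<pi>) s"
proof -
  obtain g h where pe: "\<And>s. g + h s = RR l \<pi> s + mv (PP \<pi>) h s" using poisson_exists[OF PPs] by blast
  define c where "c = (\<Sum>t\<in>UNIV. M \<pi> t * h t)"
  have H: "H l \<pi> = (\<lambda>s. h s - c)" using H_char(1)[OF pe] unfolding c_def by auto
  have "mv (PP \<pi>) (\<lambda>s. h s - c) s = mv (PP \<pi>) h s - c" by (simp add: mv_diff stoch_mv_const[OF stP])
  then show ?thesis unfolding H using pe[of s] H_char(2)[OF pe] by simp
qed

lemma H_norm: "(\<Sum>t\<in>UNIV. M \<pi> t * H l \<pi> t) = 0"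
proof -
  obtain g h where pe: "\<And>s. g + h s = RR l \<pi> s + mv (PP \<pi>) h s" using poisson_exists[OF PPs] by blast
  define c where "c = (\<Sum>t\<in>UNIV. M \<pi> t * h t)"
  have H: "H l \<pi> = (\<lambda>s. h s - c)" using H_char(1)[OF pe] unfolding c_def by auto
  show ?thesis unfolding H by (simp add: right_diff_distrib sum_subtractf sum_distrib_right[symmetric] M_sum c_def)
qed

lemma gain_defect:
  "G l \<pi> = g - (\<Sum>t\<in>UNIV. M \<pi> t * (g + h t - RR l \<pi> t - mv (PP \<pi>) h t))"
proof -
  have "(\<Sum>t\<in>UNIV. M \<pi> t * (g + h t - RR l \<pi> t - mv (PP \<pi>) h t)) =
        g * (\<Sum>t\<in>UNIV. M \<pi> t) + (\<Sum>t\<in>UNIV. M \<pi> t * h t) - G l \<pi> - (\<Sum>t\<in>UNIV. M \<pi> t * mv (PP \<pi>) h t)"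
    unfolding G_def by (simp add: algebra_simps sum.distrib sum_subtractf sum_distrib_left)
  then show ?thesis using M_stat[of \<pi> h] M_sum[of \<pi>] by simp
qed

definition val1 where "val1 l \<pi> s = r1 s - l + mv P1 (H l \<pi>) s"
definition val0 where "val0 l \<pi> s = r0 s + mv P0 (H l \<pi>) s"

lemma RR_PP_val: "RR l \<pi>' s + mv (PP \<pi>') h s = (if s \<in> \<pi>' then r1 s - l + mv P1 h s else r0 s + mv P0 h s)"
  unfolding pol_r_def pol_P_def mv_def by auto

lemma adv_val: "adv P0 P1 r0 r1 l \<pi> s = val1 l \<pi> s - val0 l \<pi> s"
  unfolding adv_def val1_def val0_def mv_def
  by (simp add: left_diff_distrib sum_subtractf)

lemma H_val: "G l \<pi> + H l \<pi> s = (if s \<in> \<pi> then val1 l \<pi> s else val0 l \<pi> s)"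
  using H_poisson[of l \<pi> s] unfolding RR_PP_val val1_def val0_def by simp

definition SC where
  "SC l \<pi> \<longleftrightarrow> (\<forall>s. (s \<in> \<pi> \<longrightarrow> 0 \<le> adv P0 P1 r0 r1 l \<pi> s) \<and> (s \<notin> \<pi> \<longrightarrow> adv P0 P1 r0 r1 l \<pi> s \<le> 0))"

lemma SC_opt_eq:
  assumes "SC l \<pi>"
  shows "val1 l \<pi> s \<le> G l \<pi> + H l \<pi> s" "val0 l \<pi> s \<le> G l \<pi> + H l \<pi> s"
  using assms H_val[of l \<pi> s] unfolding SC_def adv_val by (auto split: if_splits)

lemma SC_any_policy:
  assumes "SC l \<pi>"
  shows "RR l \<pi>' s + mv (PP \<pi>') (H l \<pi>) s \<le> G l \<pi> + H l \<pi> s"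
  using SC_opt_eq[OF assms, of s] unfolding RR_PP_val val1_def val0_def by auto

lemma SC_gain_opt:
  assumes "SC l \<pi>"
  shows "G l \<pi>' \<le> G l \<pi>"
proof -
  have "G l \<pi>' = G l \<pi> - (\<Sum>t\<in>UNIV. M \<pi>' t * (G l \<pi> + H l \<pi> t - RR l \<pi>' t - mv (PP \<pi>') (H l \<pi>) t))"
    by (rule gain_defect)
  moreover have "0 \<le> (\<Sum>t\<in>UNIV. M \<pi>' t * (G l \<pi> + H l \<pi> t - RR l \<pi>' t - mv (PP \<pi>') (H l \<pi>) t))"
    using SC_any_policy[OF assms] M_nonneg by (intro sum_nonneg mult_nonneg_nonneg) (auto simp: algebra_simps)
  ultimately show ?thesis by simp
qed

end

context mdp begin

lemma M_stat_delta: "(\<Sum>t\<in>UNIV. M \<pi> t * PP \<pi> t u) = M \<pi> u"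
proof -
  have "(\<Sum>t\<in>UNIV. M \<pi> t * mv (PP \<pi>) (\<lambda>v. if v = u then 1 else 0) t) = (\<Sum>t\<in>UNIV. M \<pi> t * (if t = u then 1 else 0))"
    by (rule M_stat)
  then show ?thesis by (simp add: mv_delta if_distrib cong: if_cong)
qed

lemma RR_PP_same:
  assumes "t \<in> a \<longleftrightarrow> t \<in> b"
  shows "RR l a t + mv (PP a) h t = RR l b t + mv (PP b) h t"
  using assms unfolding RR_PP_val by simp

lemma PP_same: "t \<in> a \<longleftrightarrow> t \<in> b \<Longrightarrow> PP a t u = PP b t u"
  unfolding pol_P_def by simp

lemma mdp_closed_inter:
  assumes c1: "closed_set (PP a) M1" and c2: "closed_set (PP b) M2" and x: "x \<in> M1" and y: "y \<in> M2"
  shows "M1 \<inter> M2 \<noteq> {}"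
proof
  assume dis: "M1 \<inter> M2 = {}"
  define \<sigma> where "\<sigma> = (a \<inter> M1) \<union> (b - M1)"
  have cc1: "closed_set (PP \<sigma>) M1"
    unfolding closed_set_def
  proof (intro allI impI)
    fix s t assume s: "s \<in> M1" and pst: "0 < PP \<sigma> s t"
    have "s \<in> \<sigma> \<longleftrightarrow> s \<in> a" using s unfolding \<sigma>_def by auto
    then have "PP \<sigma> s t = PP a s t" by (rule PP_same)
    then show "t \<in> M1" using c1 s pst unfolding closed_set_def by auto
  qed
  have cc2: "closed_set (PP \<sigma>) M2"
    unfolding closed_set_def
  proof (intro allI impI)
    fix s t assume s: "s \<in> M2" and pst: "0 < PP \<sigma> s t"
    have "s \<notin> M1" using s dis by auto
    then have "s \<in> \<sigma> \<longleftrightarrow> s \<in> b" unfolding \<sigma>_def by auto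
    then have "PP \<sigma> s t = PP b s t" by (rule PP_same)
    then show "t \<in> M2" using c2 s pst unfolding closed_set_def by auto
  qed
  have "M1 \<inter> M2 \<noteq> {}" by (rule unichain_closed_inter[OF uniP cc1 cc2 x y])
  then show False using dis by simp
qed

definition toggle :: "'s \<Rightarrow> 's set \<Rightarrow> 's set" where
  "toggle s \<pi> = (if s \<in> \<pi> then \<pi> - {s} else insert s \<pi>)"

lemma switch:
  assumes opt: "\<And>\<pi>''. G l \<pi>'' \<le> G l \<pi>"
    and viol: "(s \<in> \<pi> \<and> adv P0 P1 r0 r1 l \<pi> s < 0) \<or> (s \<notin> \<pi> \<and> 0 < adv P0 P1 r0 r1 l \<pi> s)"
  shows "G l (toggle s \<pi>) = G l \<pi>" "\<And>t. H l \<pi> t \<le> H l (toggle s \<pi>) t" "H l \<pi> s < H l (toggle s \<pi>) s"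
proof -
  define \<pi>' where "\<pi>' = toggle s \<pi>"
  define g where "g = G l \<pi>"
  define h where "h = H l \<pi>"
  define d where "d t = RR l \<pi>' t + mv (PP \<pi>') h t - g - h t" for t
  have mem: "t \<noteq> s \<Longrightarrow> t \<in> \<pi>' \<longleftrightarrow> t \<in> \<pi>" for t unfolding \<pi>'_def toggle_def by auto
  have dz: "d t = 0" if "t \<noteq> s" for t
    unfolding d_def g_def h_def using RR_PP_same[OF mem[OF that], of l] H_poisson[of l \<pi> t] by simp
  have dpos: "0 < d s"
  proof (cases "s \<in> \<pi>")
    case True
    then have "s \<notin> \<pi>'" unfolding \<pi>'_def toggle_def by auto
    then have "d s = val0 l \<pi> s - val1 l \<pi> s"
      unfolding d_def RR_PP_val val0_def val1_def h_def g_def using H_val[of l \<pi> s, unfolded val0_def val1_def] True by simp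
    then show ?thesis using viol True unfolding adv_val by simp
  next
    case False
    then have "s \<in> \<pi>'" unfolding \<pi>'_def toggle_def by auto
    then have "d s = val1 l \<pi> s - val0 l \<pi> s"
      unfolding d_def RR_PP_val val0_def val1_def h_def g_def using H_val[of l \<pi> s, unfolded val0_def val1_def] False by simp
    then show ?thesis using viol False unfolding adv_val by simp
  qed
  have dnn: "0 \<le> d t" for t using dz dpos by (cases "t = s") auto
  have sumd: "(\<Sum>t\<in>UNIV. M \<pi>' t * d t) = M \<pi>' s * d s"
  proof -
    have "(\<Sum>t\<in>UNIV. M \<pi>' t * d t) = (\<Sum>t\<in>UNIV. if t = s then M \<pi>' s * d s else 0)"
      by (rule sum.cong) (auto simp: dz)
    then show ?thesis by simp
  qed
  have Gp: "G l \<pi>' = g + M \<pi>' s * d s"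
  proof -
    have "G l \<pi>' = g - (\<Sum>t\<in>UNIV. M \<pi>' t * (g + h t - RR l \<pi>' t - mv (PP \<pi>') h t))"
      by (rule gain_defect)
    also have "(\<Sum>t\<in>UNIV. M \<pi>' t * (g + h t - RR l \<pi>' t - mv (PP \<pi>') h t)) = - (\<Sum>t\<in>UNIV. M \<pi>' t * d t)"
      unfolding d_def by (simp add: sum_negf[symmetric] algebra_simps)
    finally show ?thesis using sumd by simp
  qed
  have "G l \<pi>' \<le> g" using opt unfolding g_def by blast
  then have "M \<pi>' s * d s \<le> 0" using Gp by simp
  then have "M \<pi>' s \<le> 0" using dpos by (simp add: mult_le_0_iff)
  then have Ms: "M \<pi>' s = 0" using M_nonneg[of \<pi>' s] by simp
  show G1: "G l (toggle s \<pi>) = G l \<pi>" using Gp Ms unfolding \<pi>'_def g_def by simp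
  have stat: "(\<Sum>t\<in>UNIV. M \<pi>' t * PP \<pi> t u) = M \<pi>' u" for u
  proof -
    have "(\<Sum>t\<in>UNIV. M \<pi>' t * PP \<pi> t u) = (\<Sum>t\<in>UNIV. M \<pi>' t * PP \<pi>' t u)"
    proof (rule sum.cong)
      fix t
      show "M \<pi>' t * PP \<pi> t u = M \<pi>' t * PP \<pi>' t u"
      proof (cases "t = s")
        case True then show ?thesis by (simp add: Ms)
      next
        case False then show ?thesis using PP_same[OF mem[OF False], of u] by simp
      qed
    qed simp
    then show ?thesis using M_stat_delta by simp
  qed
  have MM: "M \<pi>' u = M \<pi> u" for u by (rule mu_unique[OF PPs M_sum stat])
  define x where "x t = H l \<pi>' t - h t" for t
  have xeq: "x t = mv (PP \<pi>') x t + d t" for t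
  proof -
    have "G l \<pi>' + H l \<pi>' t = RR l \<pi>' t + mv (PP \<pi>') (H l \<pi>') t" by (rule H_poisson)
    moreover have "mv (PP \<pi>') x t = mv (PP \<pi>') (H l \<pi>') t - mv (PP \<pi>') h t"
      unfolding x_def by (rule mv_diff)
    ultimately show ?thesis unfolding x_def d_def using G1 unfolding \<pi>'_def g_def by simp
  qed
  have sup: "mv (PP \<pi>') x t \<le> x t" for t using xeq[of t] dnn[of t] by simp
  have "(\<Sum>t\<in>UNIV. M \<pi>' t * x t) = 0"
  proof -
    have "(\<Sum>t\<in>UNIV. M \<pi>' t * x t) = (\<Sum>t\<in>UNIV. M \<pi>' t * H l \<pi>' t) - (\<Sum>t\<in>UNIV. M \<pi> t * h t)"
      unfolding x_def by (simp add: right_diff_distrib sum_subtractf MM)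
    then show ?thesis unfolding h_def using H_norm by simp
  qed
  moreover have "(\<Sum>t\<in>UNIV. M \<pi>' t * x t) \<le> x t" for t by (rule super_ge_mu[OF PPs sup])
  ultimately have xnn: "0 \<le> x t" for t by simp
  have "0 \<le> mv (PP \<pi>') x s" by (rule mv_bound_ge[OF stP]) (rule xnn)
  then have "0 < x s" using xeq[of s] dpos by simp
  then show "H l \<pi> s < H l (toggle s \<pi>) s" unfolding x_def h_def \<pi>'_def by simp
  show "\<And>t. H l \<pi> t \<le> H l (toggle s \<pi>) t" using xnn unfolding x_def h_def \<pi>'_def by simp
qed

lemma not_SC: "\<not> SC l \<pi> \<Longrightarrow> \<exists>s. (s \<in> \<pi> \<and> adv P0 P1 r0 r1 l \<pi> s < 0) \<or> (s \<notin> \<pi> \<and> 0 < adv P0 P1 r0 r1 l \<pi> s)"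
  unfolding SC_def by (auto simp: not_le)

lemma SC_exists: "\<exists>\<pi>. SC l \<pi>"
proof -
  define Gm where "Gm = Max (range (G l))"
  have "Gm \<in> range (G l)" unfolding Gm_def by (rule Max_in) auto
  then obtain \<pi>0 where p0: "G l \<pi>0 = Gm" by auto
  have Gle: "G l \<pi> \<le> Gm" for \<pi> unfolding Gm_def by (rule Max_ge) auto
  define Gopt where "Gopt = {\<pi>. G l \<pi> = Gm}"
  define SH where "SH \<pi> = (\<Sum>t\<in>UNIV. H l \<pi> t)" for \<pi>
  have "Max (SH ` Gopt) \<in> SH ` Gopt" by (rule Max_in) (use p0 Gopt_def in auto)
  then obtain \<pi> where p: "\<pi> \<in> Gopt" "SH \<pi> = Max (SH ` Gopt)" by auto
  have SHle: "SH \<pi>' \<le> SH \<pi>" if "\<pi>' \<in> Gopt" for \<pi>' unfolding p(2) by (rule Max_ge) (use that in auto)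
  show ?thesis
  proof (rule ccontr)
    assume "\<nexists>\<pi>. SC l \<pi>"
    then have "\<not> SC l \<pi>" by blast
    then obtain s where v: "(s \<in> \<pi> \<and> adv P0 P1 r0 r1 l \<pi> s < 0) \<or> (s \<notin> \<pi> \<and> 0 < adv P0 P1 r0 r1 l \<pi> s)"
      using not_SC[of l \<pi>] by blast
    have opt: "G l \<pi>'' \<le> G l \<pi>" for \<pi>'' using Gle p(1) unfolding Gopt_def by simp
    note sw = switch[OF opt v]
    have "toggle s \<pi> \<in> Gopt" using sw(1) p(1) unfolding Gopt_def by simp
    moreover have "SH \<pi> < SH (toggle s \<pi>)" unfolding SH_def
      by (rule sum_strict_mono_ex1) (use sw(2,3) in auto)
    ultimately show False using SHle[of "toggle s \<pi>"] by simp
  qed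
qed

lemma gain_opt_iff: "gain_opt P0 P1 r0 r1 l \<pi> \<longleftrightarrow> (\<forall>\<pi>'. G l \<pi>' \<le> G l \<pi>)"
  unfolding gain_opt_def pgain_eq by simp

lemma BO_SC:
  assumes "bias_opt P0 P1 r0 r1 l \<pi>"
  shows "SC l \<pi>"
proof (rule ccontr)
  assume "\<not> SC l \<pi>"
  then obtain s where v: "(s \<in> \<pi> \<and> adv P0 P1 r0 r1 l \<pi> s < 0) \<or> (s \<notin> \<pi> \<and> 0 < adv P0 P1 r0 r1 l \<pi> s)"
    using not_SC by blast
  have opt: "G l \<pi>'' \<le> G l \<pi>" for \<pi>'' using assms unfolding bias_opt_def gain_opt_iff by blast
  note sw = switch[OF opt v]
  have "gain_opt P0 P1 r0 r1 l (toggle s \<pi>)" unfolding gain_opt_iff using sw(1) opt by simp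
  then have "H l (toggle s \<pi>) s \<le> H l \<pi> s" using assms unfolding bias_opt_def by blast
  then show False using sw(3) by simp
qed

lemma SC_adv_eq:
  assumes s1: "SC l a" and s2: "SC l b"
  shows "adv P0 P1 r0 r1 l a s = adv P0 P1 r0 r1 l b s"
proof -
  have gg: "G l a = G l b" using SC_gain_opt[OF s1, of b] SC_gain_opt[OF s2, of a] by simp
  define x where "x t = H l a t - H l b t" for t
  have xb: "mv (PP b) x t \<le> x t" for t
  proof -
    have "RR l b t + mv (PP b) (H l a) t \<le> G l a + H l a t" by (rule SC_any_policy[OF s1])
    moreover have "G l b + H l b t = RR l b t + mv (PP b) (H l b) t" by (rule H_poisson)
    moreover have "mv (PP b) x t = mv (PP b) (H l a) t - mv (PP b) (H l b) t" unfolding x_def by (rule mv_diff)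
    ultimately show ?thesis unfolding x_def using gg by simp
  qed
  have xa: "x t \<le> mv (PP a) x t" for t
  proof -
    have "RR l a t + mv (PP a) (H l b) t \<le> G l b + H l b t" by (rule SC_any_policy[OF s2])
    moreover have "G l a + H l a t = RR l a t + mv (PP a) (H l a) t" by (rule H_poisson)
    moreover have "mv (PP a) x t = mv (PP a) (H l a) t - mv (PP a) (H l b) t" unfolding x_def by (rule mv_diff)
    ultimately show ?thesis unfolding x_def using gg by simp
  qed
  obtain p where p: "x p = Max (range x)" using Max_range_in by (metis imageE)
  obtain q where q: "x q = Min (range x)" using Min_range_in by (metis imageE)
  have "{s. x s = Max (range x)} \<inter> {s. x s = Min (range x)} \<noteq> {}"
    by (rule mdp_closed_inter[OF max_closed[OF stP xa] min_closed[OF stP xb]]) (use p q in auto)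
  then have xc0: "x t = x q" for t by (rule maxmin_const)
  obtain c where xc: "\<And>t. x t = c" using xc0 by blast
  have "adv P0 P1 r0 r1 l a s - adv P0 P1 r0 r1 l b s = (\<Sum>t\<in>UNIV. (P1 s t - P0 s t) * x t)"
    unfolding adv_def x_def by (simp add: sum_subtractf[symmetric] algebra_simps)
  also have "\<dots> = c * ((\<Sum>t\<in>UNIV. P1 s t) - (\<Sum>t\<in>UNIV. P0 s t))"
    by (simp add: xc sum_distrib_left sum_subtractf algebra_simps)
  also have "\<dots> = 0" using st0 st1 unfolding stochastic_def by simp
  finally show ?thesis by simp
qed

end

context mdp begin

lemma BO_exists: "\<exists>\<pi>. bias_opt P0 P1 r0 r1 l \<pi>"
proof -
  obtain \<pi>0 where s0: "SC l \<pi>0" using SC_exists by blast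
  define g where "g = G l \<pi>0"
  define h0 where "h0 = H l \<pi>0"
  have opt0: "G l \<pi> \<le> g" for \<pi> using SC_gain_opt[OF s0] unfolding g_def by simp
  define Gopt where "Gopt = {\<pi>. G l \<pi> = g}"
  have ub: "H l \<pi>' t \<le> h0 t - (\<Sum>u\<in>UNIV. M \<pi>' u * h0 u)" if "\<pi>' \<in> Gopt" for \<pi>' t
  proof -
    have Gp: "G l \<pi>' = g" using that unfolding Gopt_def by simp
    define d where "d u = g + h0 u - RR l \<pi>' u - mv (PP \<pi>') h0 u" for u
    have dnn: "0 \<le> d u" for u using SC_any_policy[OF s0, of \<pi>' u] unfolding d_def g_def h0_def by simp
    define x where "x u = h0 u - H l \<pi>' u" for u
    have xeq: "x u = d u + mv (PP \<pi>') x u" for u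
    proof -
      have "G l \<pi>' + H l \<pi>' u = RR l \<pi>' u + mv (PP \<pi>') (H l \<pi>') u" by (rule H_poisson)
      moreover have "mv (PP \<pi>') x u = mv (PP \<pi>') h0 u - mv (PP \<pi>') (H l \<pi>') u"
        unfolding x_def by (rule mv_diff)
      ultimately show ?thesis unfolding x_def d_def using Gp by simp
    qed
    have sup: "mv (PP \<pi>') x u \<le> x u" for u using xeq[of u] dnn[of u] by simp
    have "(\<Sum>u\<in>UNIV. M \<pi>' u * x u) \<le> x t" by (rule super_ge_mu[OF PPs sup])
    moreover have "(\<Sum>u\<in>UNIV. M \<pi>' u * x u) = (\<Sum>u\<in>UNIV. M \<pi>' u * h0 u) - (\<Sum>u\<in>UNIV. M \<pi>' u * H l \<pi>' u)"
      unfolding x_def by (simp add: right_diff_distrib sum_subtractf)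
    ultimately show ?thesis using H_norm[of \<pi>' l] unfolding x_def by simp
  qed
  have p0: "\<pi>0 \<in> Gopt" unfolding Gopt_def g_def by simp
  define F where "F \<pi> = (\<Sum>u\<in>UNIV. M \<pi> u * h0 u)" for \<pi>
  have "Min (F ` Gopt) \<in> F ` Gopt" by (rule Min_in) (use p0 in auto)
  then obtain \<pi>1 where p1: "\<pi>1 \<in> Gopt" "F \<pi>1 = Min (F ` Gopt)" by auto
  have Fle: "F \<pi>1 \<le> F \<pi>'" if "\<pi>' \<in> Gopt" for \<pi>' unfolding p1(2) by (rule Min_le) (use that in auto)
  define d1 where "d1 u = g + h0 u - RR l \<pi>1 u - mv (PP \<pi>1) h0 u" for u
  have d1nn: "0 \<le> d1 u" for u using SC_any_policy[OF s0, of \<pi>1 u] unfolding d1_def g_def h0_def by simp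
  have "G l \<pi>1 = g - (\<Sum>u\<in>UNIV. M \<pi>1 u * d1 u)" unfolding d1_def by (rule gain_defect)
  then have "(\<Sum>u\<in>UNIV. M \<pi>1 u * d1 u) = 0" using p1(1) unfolding Gopt_def by simp
  then have "\<forall>u\<in>UNIV. M \<pi>1 u * d1 u = 0"
    by (subst (asm) sum_nonneg_eq_0_iff) (auto intro: mult_nonneg_nonneg M_nonneg d1nn)
  then have all0: "M \<pi>1 u * d1 u = 0" for u by simp
  have d1z: "d1 u = 0" if "0 < M \<pi>1 u" for u using all0[of u] that by simp
  define \<pi>2 where "\<pi>2 = {u. (0 < M \<pi>1 u \<and> u \<in> \<pi>1) \<or> (\<not> 0 < M \<pi>1 u \<and> u \<in> \<pi>0)}"
  have pe2: "g + h0 u = RR l \<pi>2 u + mv (PP \<pi>2) h0 u" for u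
  proof (cases "0 < M \<pi>1 u")
    case True
    then have "u \<in> \<pi>2 \<longleftrightarrow> u \<in> \<pi>1" unfolding \<pi>2_def by auto
    then have "RR l \<pi>2 u + mv (PP \<pi>2) h0 u = RR l \<pi>1 u + mv (PP \<pi>1) h0 u" by (rule RR_PP_same)
    then show ?thesis using d1z[OF True] unfolding d1_def by simp
  next
    case False
    then have "u \<in> \<pi>2 \<longleftrightarrow> u \<in> \<pi>0" unfolding \<pi>2_def by auto
    then have "RR l \<pi>2 u + mv (PP \<pi>2) h0 u = RR l \<pi>0 u + mv (PP \<pi>0) h0 u" by (rule RR_PP_same)
    then show ?thesis using H_poisson[of l \<pi>0 u] unfolding g_def h0_def by simp
  qed
  have stat: "(\<Sum>t\<in>UNIV. M \<pi>1 t * PP \<pi>2 t u) = M \<pi>1 u" for u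
  proof -
    have "(\<Sum>t\<in>UNIV. M \<pi>1 t * PP \<pi>2 t u) = (\<Sum>t\<in>UNIV. M \<pi>1 t * PP \<pi>1 t u)"
    proof (rule sum.cong)
      fix t
      show "M \<pi>1 t * PP \<pi>2 t u = M \<pi>1 t * PP \<pi>1 t u"
      proof (cases "0 < M \<pi>1 t")
        case True
        then have "t \<in> \<pi>2 \<longleftrightarrow> t \<in> \<pi>1" unfolding \<pi>2_def by auto
        then show ?thesis using PP_same[of t \<pi>2 \<pi>1 u] by simp
      next
        case False
        then have "M \<pi>1 t = 0" using M_nonneg[of \<pi>1 t] by simp
        then show ?thesis by simp
      qed
    qed simp
    then show ?thesis using M_stat_delta by simp
  qed
  have MM: "M \<pi>1 u = M \<pi>2 u" for u by (rule mu_unique[OF PPs M_sum stat])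
  have H2: "H l \<pi>2 t = h0 t - F \<pi>1" for t
    using H_char(1)[OF pe2, of t] MM unfolding F_def by simp
  have G2: "G l \<pi>2 = g" using H_char(2)[OF pe2] by simp
  show ?thesis
  proof (intro exI[of _ \<pi>2])
    show "bias_opt P0 P1 r0 r1 l \<pi>2"
      unfolding bias_opt_def gain_opt_iff
    proof (intro conjI allI impI)
      fix \<pi>' show "G l \<pi>' \<le> G l \<pi>2" using opt0 G2 by simp
    next
      fix \<pi>' s assume a: "\<forall>\<pi>''. G l \<pi>'' \<le> G l \<pi>'"
      have "G l \<pi>0 \<le> G l \<pi>'" using a by blast
      then have "\<pi>' \<in> Gopt" using opt0[of \<pi>'] unfolding Gopt_def g_def by simp
      then have "H l \<pi>' s \<le> h0 s - F \<pi>'" using ub unfolding F_def by blast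
      also have "\<dots> \<le> h0 s - F \<pi>1" using Fle[OF \<open>\<pi>' \<in> Gopt\<close>] by simp
      finally show "H l \<pi>' s \<le> H l \<pi>2 s" using H2 by simp
    qed
  qed
qed

lemma opt_adv_SC:
  assumes "SC l \<pi>"
  shows "opt_adv P0 P1 r0 r1 l s = adv P0 P1 r0 r1 l \<pi> s"
proof -
  have "bias_opt P0 P1 r0 r1 l (SOME \<pi>. bias_opt P0 P1 r0 r1 l \<pi>)"
    using someI_ex[OF BO_exists] .
  then have "SC l (SOME \<pi>. bias_opt P0 P1 r0 r1 l \<pi>)" by (rule BO_SC)
  then show ?thesis unfolding opt_adv_def using SC_adv_eq[OF _ assms] by blast
qed

lemma RR_affine: "RR l \<pi> t = (1 - l) * RR 0 \<pi> t + l * RR 1 \<pi> t"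
  unfolding pol_r_def by (simp add: algebra_simps)

lemma H_affine: "H l \<pi> t = (1 - l) * H 0 \<pi> t + l * H 1 \<pi> t"
proof -
  define h where "h u = (1 - l) * H 0 \<pi> u + l * H 1 \<pi> u" for u
  define g where "g = (1 - l) * G 0 \<pi> + l * G 1 \<pi>"
  have pe: "g + h u = RR l \<pi> u + mv (PP \<pi>) h u" for u
  proof -
    have mh: "mv (PP \<pi>) h u = (1 - l) * mv (PP \<pi>) (H 0 \<pi>) u + l * mv (PP \<pi>) (H 1 \<pi>) u"
      unfolding h_def by (simp add: mv_add mv_scale)
    have hu: "h u = (1 - l) * H 0 \<pi> u + l * H 1 \<pi> u" unfolding h_def by simp
    have e0: "G 0 \<pi> + H 0 \<pi> u = RR 0 \<pi> u + mv (PP \<pi>) (H 0 \<pi>) u" by (rule H_poisson)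
    have e1: "G 1 \<pi> + H 1 \<pi> u = RR 1 \<pi> u + mv (PP \<pi>) (H 1 \<pi>) u" by (rule H_poisson)
    have "(1 - l) * (G 0 \<pi> + H 0 \<pi> u) + l * (G 1 \<pi> + H 1 \<pi> u) =
          (1 - l) * (RR 0 \<pi> u + mv (PP \<pi>) (H 0 \<pi>) u) + l * (RR 1 \<pi> u + mv (PP \<pi>) (H 1 \<pi>) u)"
      by (simp only: e0 e1)
    then show ?thesis unfolding mh hu g_def RR_affine[of l \<pi> u] by (simp add: algebra_simps)
  qed
  have "(\<Sum>u\<in>UNIV. M \<pi> u * h u) = (\<Sum>u\<in>UNIV. (1 - l) * (M \<pi> u * H 0 \<pi> u) + l * (M \<pi> u * H 1 \<pi> u))"
    unfolding h_def by (rule sum.cong) (simp_all add: algebra_simps)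
  also have "\<dots> = (1 - l) * (\<Sum>u\<in>UNIV. M \<pi> u * H 0 \<pi> u) + l * (\<Sum>u\<in>UNIV. M \<pi> u * H 1 \<pi> u)"
    by (simp add: sum.distrib sum_distrib_left)
  finally have "(\<Sum>u\<in>UNIV. M \<pi> u * h u) = (1 - l) * (\<Sum>u\<in>UNIV. M \<pi> u * H 0 \<pi> u) + l * (\<Sum>u\<in>UNIV. M \<pi> u * H 1 \<pi> u)" .
  then have "(\<Sum>u\<in>UNIV. M \<pi> u * h u) = 0" using H_norm by simp
  then show ?thesis using H_char(1)[OF pe, of t] unfolding h_def by simp
qed

lemma adv_mv: "adv P0 P1 r0 r1 l \<pi> s = r1 s - l - r0 s + (mv P1 (H l \<pi>) s - mv P0 (H l \<pi>) s)"
  unfolding adv_def mv_def by (simp add: left_diff_distrib sum_subtractf)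

lemma adv_affine: "adv P0 P1 r0 r1 l \<pi> s = (1 - l) * adv P0 P1 r0 r1 0 \<pi> s + l * adv P0 P1 r0 r1 1 \<pi> s"
proof -
  have e: "H l \<pi> = (\<lambda>t. (1 - l) * H 0 \<pi> t + l * H 1 \<pi> t)" by (rule ext) (rule H_affine)
  have "mv P1 (H l \<pi>) s = (1 - l) * mv P1 (H 0 \<pi>) s + l * mv P1 (H 1 \<pi>) s"
    unfolding e by (simp add: mv_add mv_scale)
  moreover have "mv P0 (H l \<pi>) s = (1 - l) * mv P0 (H 0 \<pi>) s + l * mv P0 (H 1 \<pi>) s"
    unfolding e by (simp add: mv_add mv_scale)
  ultimately show ?thesis unfolding adv_mv by (simp add: algebra_simps)
qed

lemma D_max_ge: "diameter (PP \<pi>) \<le> D_max P0 P1"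
  unfolding D_max_def by (rule Max_ge) auto

lemma D_max_nonneg: "0 \<le> D_max P0 P1"
  using D_max_ge[of "{}"] diam_nonneg[of "PP {}"] by linarith

lemma slope: "\<bar>adv P0 P1 r0 r1 1 \<pi> s - adv P0 P1 r0 r1 0 \<pi> s\<bar> \<le> 2 * D_max P0 P1 + 1"
proof -
  define \<delta> where "\<delta> t = H 0 \<pi> t - H 1 \<pi> t" for t
  define gd where "gd = G 0 \<pi> - G 1 \<pi>"
  define ind where "ind t = (if t \<in> \<pi> then 1 else (0::real))" for t
  have ind: "RR 0 \<pi> t - RR 1 \<pi> t = ind t" for t unfolding pol_r_def ind_def by simp
  have pe: "gd + \<delta> t = ind t + mv (PP \<pi>) \<delta> t" for t
    using H_poisson[of 0 \<pi> t] H_poisson[of 1 \<pi> t] ind[of t] mv_diff[of "PP \<pi>" "H 0 \<pi>" "H 1 \<pi>" t]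
    unfolding gd_def \<delta>_def by simp
  have gdi: "gd = (\<Sum>t\<in>UNIV. M \<pi> t * ind t)"
    unfolding gd_def G_def by (simp add: sum_subtractf[symmetric] right_diff_distrib[symmetric] ind)
  have "0 \<le> gd" unfolding gdi ind_def by (intro sum_nonneg) (auto simp: M_nonneg)
  moreover have "gd \<le> 1"
  proof -
    have "gd \<le> (\<Sum>t\<in>UNIV. M \<pi> t * 1)" unfolding gdi ind_def
      by (intro sum_mono mult_left_mono) (auto simp: M_nonneg)
    then show ?thesis using M_sum by simp
  qed
  ultimately have fb: "\<bar>ind t - gd\<bar> \<le> 1" for t unfolding ind_def by auto
  have sp: "\<bar>\<delta> x - \<delta> y\<bar> \<le> 2 * diameter (PP \<pi>)" for x y by (rule span_bound[OF PPs pe fb])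
  have sp2: "\<bar>\<delta> x - \<delta> y\<bar> \<le> 2 * D_max P0 P1" for x y using sp[of x y] D_max_ge[of \<pi>] by linarith
  have md: "\<bar>mv P1 \<delta> s - mv P0 \<delta> s\<bar> \<le> 2 * D_max P0 P1" by (rule mv_diff_span[OF st1 st0 sp2])
  have "mv P1 \<delta> s = mv P1 (H 0 \<pi>) s - mv P1 (H 1 \<pi>) s" unfolding \<delta>_def by (rule mv_diff)
  moreover have "mv P0 \<delta> s = mv P0 (H 0 \<pi>) s - mv P0 (H 1 \<pi>) s" unfolding \<delta>_def by (rule mv_diff)
  ultimately have "adv P0 P1 r0 r1 1 \<pi> s - adv P0 P1 r0 r1 0 \<pi> s = -1 - (mv P1 \<delta> s - mv P0 \<delta> s)"
    unfolding adv_mv by simp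
  then show ?thesis using md by linarith
qed

lemma SC_closed: "closed {l. SC l \<pi>}"
proof -
  define A where "A s l = (1 - l) * adv P0 P1 r0 r1 0 \<pi> s + l * adv P0 P1 r0 r1 1 \<pi> s" for s l
  have cA: "continuous_on UNIV (A s)" for s unfolding A_def by (intro continuous_intros)
  have eq: "{l. SC l \<pi>} = (\<Inter>s. if s \<in> \<pi> then {l. 0 \<le> A s l} else {l. A s l \<le> 0})"
    unfolding SC_def A_def adv_affine[symmetric] by auto
  show ?thesis unfolding eq
    by (intro closed_INT ballI) (auto intro!: closed_Collect_le cA continuous_intros)
qed

end

context mdp begin

lemma local_lip:
  "\<exists>d>0. \<forall>y. dist y x < d \<longrightarrow>
     \<bar>opt_adv P0 P1 r0 r1 y s - opt_adv P0 P1 r0 r1 x s\<bar> \<le> (2 * D_max P0 P1 + 1) * \<bar>y - x\<bar>"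
proof -
  have ev: "eventually (\<lambda>y. \<forall>\<pi>. x \<notin> {l. SC l \<pi>} \<longrightarrow> y \<notin> {l. SC l \<pi>}) (nhds x)"
  proof (rule eventually_all_finite)
    fix \<pi> :: "'s set"
    show "eventually (\<lambda>y. x \<notin> {l. SC l \<pi>} \<longrightarrow> y \<notin> {l. SC l \<pi>}) (nhds x)"
    proof (cases "x \<in> {l. SC l \<pi>}")
      case True then show ?thesis by simp
    next
      case False
      have "open (- {l. SC l \<pi>})" using SC_closed by (simp add: open_Compl)
      then have "eventually (\<lambda>y. y \<in> - {l. SC l \<pi>}) (nhds x)"
        using False by (intro eventually_nhds_in_open) auto
      then show ?thesis by (rule eventually_mono) auto
    qed
  qed
  then obtain d where d: "d > 0" "\<And>y. dist y x < d \<Longrightarrow> (\<forall>\<pi>. x \<notin> {l. SC l \<pi>} \<longrightarrow> y \<notin> {l. SC l \<pi>})"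
    unfolding eventually_nhds_metric by blast
  show ?thesis
  proof (intro exI[of _ d] conjI allI impI)
    show "0 < d" by fact
    fix y assume dy: "dist y x < d"
    obtain \<pi> where sy: "SC y \<pi>" using SC_exists by blast
    then have sx: "SC x \<pi>" using d(2)[OF dy] by blast
    have "opt_adv P0 P1 r0 r1 y s - opt_adv P0 P1 r0 r1 x s = adv P0 P1 r0 r1 y \<pi> s - adv P0 P1 r0 r1 x \<pi> s"
      using opt_adv_SC[OF sy] opt_adv_SC[OF sx] by simp
    also have "\<dots> = (y - x) * (adv P0 P1 r0 r1 1 \<pi> s - adv P0 P1 r0 r1 0 \<pi> s)"
      using adv_affine[of y \<pi> s] adv_affine[of x \<pi> s] by (simp add: algebra_simps)
    finally have "\<bar>opt_adv P0 P1 r0 r1 y s - opt_adv P0 P1 r0 r1 x s\<bar> =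
        \<bar>y - x\<bar> * \<bar>adv P0 P1 r0 r1 1 \<pi> s - adv P0 P1 r0 r1 0 \<pi> s\<bar>" by (simp add: abs_mult)
    also have "\<dots> \<le> \<bar>y - x\<bar> * (2 * D_max P0 P1 + 1)" by (intro mult_left_mono slope) auto
    finally show "\<bar>opt_adv P0 P1 r0 r1 y s - opt_adv P0 P1 r0 r1 x s\<bar> \<le> (2 * D_max P0 P1 + 1) * \<bar>y - x\<bar>"
      by (simp add: mult.commute)
  qed
qed

lemma lip_ordered:
  assumes "a \<le> b"
  shows "\<bar>opt_adv P0 P1 r0 r1 b s - opt_adv P0 P1 r0 r1 a s\<bar> \<le> (2 * D_max P0 P1 + 1) * (b - a)"
  using assms
proof (induction rule: Bolzano)
  case (trans a b c)
  then show ?case by (simp add: algebra_simps)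
next
  case (local x)
  obtain d where d: "d > 0" "\<And>y. dist y x < d \<Longrightarrow>
     \<bar>opt_adv P0 P1 r0 r1 y s - opt_adv P0 P1 r0 r1 x s\<bar> \<le> (2 * D_max P0 P1 + 1) * \<bar>y - x\<bar>"
    using local_lip[of x s] by blast
  show ?case
  proof (intro exI[of _ d] conjI allI impI)
    show "0 < d" by fact
    fix a' b' assume ab: "a' \<le> x \<and> x \<le> b' \<and> b' - a' < d"
    have "dist b' x < d" "dist a' x < d" using ab by (auto simp: dist_real_def)
    from d(2)[OF this(1)] d(2)[OF this(2)] ab
    show "\<bar>opt_adv P0 P1 r0 r1 b' s - opt_adv P0 P1 r0 r1 a' s\<bar> \<le> (2 * D_max P0 P1 + 1) * (b' - a')"
      by (simp add: algebra_simps abs_if split: if_splits) linarith?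
  qed
qed

end

theorem mainTheorem9:
  fixes P0 P1 :: "'s::finite \<Rightarrow> 's \<Rightarrow> real" and r0 r1 :: "'s \<Rightarrow> real" and s :: 's
  assumes "stochastic P0" and "stochastic P1"
    and "unichain P0 P1"
  shows "(2 * D_max P0 P1 + 1)-lipschitz_on UNIV (\<lambda>l. opt_adv P0 P1 r0 r1 l s)"
proof -
  interpret mdp P0 P1 r0 r1 using assms by unfold_locales
  show ?thesis
  proof (rule lipschitz_onI)
    fix x y :: real
    show "dist (opt_adv P0 P1 r0 r1 x s) (opt_adv P0 P1 r0 r1 y s) \<le> (2 * D_max P0 P1 + 1) * dist x y"
    proof (cases "x \<le> y")
      case True
      then show ?thesis using lip_ordered[OF True, of s] by (simp add: dist_real_def abs_minus_commute)
    next
      case False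
      have yx: "y \<le> x" using False by simp
      show ?thesis using lip_ordered[OF yx, of s] yx by (simp add: dist_real_def)
    qed
  next
    show "0 \<le> 2 * D_max P0 P1 + 1" using D_max_nonneg by simp
  qed
qed

end
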